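(* Let $T$ be a countable tree without leaves, with root $o$, and let $P$ be a stochastic nearest neighbour transition matrix on $T$ as described in the context. Let $\lambda\in\mathrm{res}^*(P)$ and let $\nu$ be a complex distribution on $\{\partial T_x : x\in T\}$. Define $$h(x)=\int_{\partial T}K(x,\xi\mid\lambda)\,d\nu(\xi),\qquad x\in T.$$ Then $h$ is $\lambda$-harmonic, i.e. $Ph=\lambda h$, where for every $x$ the sum defining $Ph(x)$ converges absolutely. Moreover, for $x\in T$ with geodesic $\pi(o,x)=[o=x_0,x_1,\dots,x_k=x]$, $$h(x)=\sum_{i=0}^{k-1}K(x,x_i\mid\lambda)\bigl(\nu(\partial T_{x_i})-\nu(\partial T_{x_{i+1}})\bigr)+K(x,x\mid\lambda)\,\nu(\partial T_x)$$ $$=K(x,o\mid\lambda)\,\nu(\partial T)+\sum_{i=1}^{k}\bigl(K(x,x_i\mid\lambda)-K(x,x_{i-1}\mid\lambda)\bigr)\nu(\partial T_{x_i}).$$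
   Context: $T$ is a countable tree; vertices may have countably infinite degree, and no vertex has degree $1$. Write $x\sim y$ for neighbours. $P=(p(x,y))_{x,y\in T}$ is stochastic with $p(x,y)>0$ iff $x\sim y$, and $Pf(x)=\sum_y p(x,y)f(y)$, which is required to converge absolutely. A function $h:T\to\mathbb{C}$ is $\lambda$-harmonic if $Ph=\lambda h$. Spectral data: $p^{(n)}(x,y)$ is the $(x,y)$-entry of $P^n$, and $\rho=\limsup_n p^{(n)}(x,y)^{1/n}$ (independent of $x,y$). Fix the root $o$. For $x\in T$ with geodesic $[o=x_0,\dots,x_k=x]$, set $\mathsf m(x)=\prod_{i=1}^k p(x_{i-1},x_i)/p(x_i,x_{i-1})$. Then $P$ is a bounded self-adjoint operator on $\ell^2(T,\mathsf m)$ with spectrum $\mathrm{spec}(P)\subset[-\rho,\rho]$. Put $\mathrm{res}(P)=\mathbb{C}\setminus\mathrm{spec}(P)$. For $\lambda\in\mathrm{res}(P)$ define the Green function $G(x,y\mid\lambda)=\bigl((\lambda I-P)^{-1}\mathbf 1_y\bigr)(x)$; for $|\lambda|>\rho$ this equals $\sum_{n\ge0}p^{(n)}(x,y)\lambda^{-n-1}$. Let $\mathrm{res}^*(P)=\{\lambda\in\mathrm{res}(P): G(x,x\mid\lambda)\neq0\text{ for all }x\in T\}$. Boundary: an end is an equivalence class of geodesic rays, two rays being equivalent if they differ in finitely many initial vertices; $\partial T$ is the set of ends. For $x\in T$ and $w\in T\cup\partial T$, $\pi(x,w)$ is the geodesic from $x$ to $w$. The confluent $x\wedge w$ is the last common vertex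 of $\pi(o,x)$ and $\pi(o,w)$, and $|x|=d(o,x)$. For $x\ne o$, $x^-$ is the neighbour of $x$ closer to $o$. $T_x=\{w\in T: x\in\pi(o,w)\}$ with $T_o=T$, and $\partial T_x$ is the set of ends having a representative ray in $T_x$. The $\lambda$-Martin kernel is $K(x,w\mid\lambda)=G(x,x\wedge w\mid\lambda)/G(o,x\wedge w\mid\lambda)$ for $x\in T$, $w\in T\cup\partial T$. A complex distribution is a map $\nu:\{\partial T_x:x\in T\}\to\mathbb{C}$ with $\nu(\partial T_x)=\sum_{y:\,y^-=x}\nu(\partial T_y)$ for every $x$, the sum converging absolutely. Integral: call $\varphi:\partial T\to\mathbb{C}$ locally constant if there is a finite subtree $\tau\ni o$ such that, for each $x\in\tau$, $\varphi$ takes a constant value $\varphi_x$ on $\partial T_x\setminus\bigcup_{y\in S_\tau(x)}\partial T_y$, where $S_\tau(x)=\{y\in\tau:y^-=x\}$. Then $\int_{\partial T}\varphi\,d\nu=\sum_{x\in\tau}\varphi_x\bigl(\nu(\partial T_x)-\sum_{y\in S_\tau(x)}\nu(\partial T_y)\bigr)$, which does not depend on the choice of $\tau$. For fixed $x$, the function $\xi\mapsto K(x,\xi\mid\lambda)$ is locally constant. *)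

theory Defs
  imports "HOL-Analysis.Analysis"
begin

text \<open>The tree is given by a symmetric irreflexive adjacency relation E on the
whole (countable) vertex type; being a tree means: between any two vertices there
is exactly one simple path (connected and acyclic).\<close>

definition walk :: "('v \<Rightarrow> 'v \<Rightarrow> bool) \<Rightarrow> 'v list \<Rightarrow> bool" where
  "walk E xs \<longleftrightarrow> xs \<noteq> [] \<and> (\<forall>i. Suc i < length xs \<longrightarrow> E (xs!i) (xs!Suc i))"

definition is_tree :: "('v \<Rightarrow> 'v \<Rightarrow> bool) \<Rightarrow> bool" where
  "is_tree E \<longleftrightarrow> (\<forall>x y. E x y \<longrightarrow> E y x) \<and> (\<forall>x. \<not> E x x) \<and>
     (\<forall>x y. \<exists>!xs. walk E xs \<and> distinct xs \<and> hd xs = x \<and> last xs = y)"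

definition no_leaves :: "('v \<Rightarrow> 'v \<Rightarrow> bool) \<Rightarrow> bool" where
  "no_leaves E \<longleftrightarrow> (\<forall>x. \<not> (\<exists>!y. E x y))"

definition geod :: "('v \<Rightarrow> 'v \<Rightarrow> bool) \<Rightarrow> 'v \<Rightarrow> 'v \<Rightarrow> 'v list" where
  "geod E x y = (THE xs. walk E xs \<and> distinct xs \<and> hd xs = x \<and> last xs = y)"

text \<open>x^- : neighbour of x closer to the root rt (meaningful for x \<noteq> rt).\<close>
definition parent :: "('v \<Rightarrow> 'v \<Rightarrow> bool) \<Rightarrow> 'v \<Rightarrow> 'v \<Rightarrow> 'v" where
  "parent E rt y = (let xs = geod E rt y in xs ! (length xs - 2))"

definition children :: "('v \<Rightarrow> 'v \<Rightarrow> bool) \<Rightarrow> 'v \<Rightarrow> 'v \<Rightarrow> 'v set" where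
  "children E rt x = {y. y \<noteq> rt \<and> parent E rt y = x}"

definition subtree_at :: "('v \<Rightarrow> 'v \<Rightarrow> bool) \<Rightarrow> 'v \<Rightarrow> 'v \<Rightarrow> 'v set" where
  "subtree_at E rt x = {w. x \<in> set (geod E rt w)}"

definition stochastic_nn :: "('v \<Rightarrow> 'v \<Rightarrow> bool) \<Rightarrow> ('v \<Rightarrow> 'v \<Rightarrow> real) \<Rightarrow> bool" where
  "stochastic_nn E p \<longleftrightarrow> (\<forall>x y. 0 \<le> p x y) \<and> (\<forall>x y. 0 < p x y \<longleftrightarrow> E x y) \<and>
     (\<forall>x. HAS_SUM (p x) UNIV 1)"

definition Pop :: "('v \<Rightarrow> 'v \<Rightarrow> real) \<Rightarrow> ('v \<Rightarrow> complex) \<Rightarrow> 'v \<Rightarrow> complex" where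
  "Pop p f x = (\<Sum>\<^sub>\<infinity>y. complex_of_real (p x y) * f y)"

definition mweight :: "('v \<Rightarrow> 'v \<Rightarrow> bool) \<Rightarrow> ('v \<Rightarrow> 'v \<Rightarrow> real) \<Rightarrow> 'v \<Rightarrow> 'v \<Rightarrow> real" where
  "mweight E p rt x = (let xs = geod E rt x in
      \<Prod>i<length xs - 1. p (xs!i) (xs!Suc i) / p (xs!Suc i) (xs!i))"

definition l2m :: "('v \<Rightarrow> 'v \<Rightarrow> bool) \<Rightarrow> ('v \<Rightarrow> 'v \<Rightarrow> real) \<Rightarrow> 'v \<Rightarrow> ('v \<Rightarrow> complex) set" where
  "l2m E p rt = {f. (\<lambda>x. mweight E p rt x * (cmod (f x))^2) summable_on UNIV}"

definition l2norm :: "('v \<Rightarrow> 'v \<Rightarrow> bool) \<Rightarrow> ('v \<Rightarrow> 'v \<Rightarrow> real) \<Rightarrow> 'v \<Rightarrow> ('v \<Rightarrow> complex) \<Rightarrow> real" where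
  "l2norm E p rt f = sqrt (\<Sum>\<^sub>\<infinity>x. mweight E p rt x * (cmod (f x))^2)"

definition is_resolvent :: "('v \<Rightarrow> 'v \<Rightarrow> bool) \<Rightarrow> ('v \<Rightarrow> 'v \<Rightarrow> real) \<Rightarrow> 'v \<Rightarrow> complex
    \<Rightarrow> (('v \<Rightarrow> complex) \<Rightarrow> ('v \<Rightarrow> complex)) \<Rightarrow> bool" where
  "is_resolvent E p rt lam R \<longleftrightarrow>
     (\<forall>f\<in>l2m E p rt. R f \<in> l2m E p rt) \<and>
     (\<exists>C. \<forall>f\<in>l2m E p rt. l2norm E p rt (R f) \<le> C * l2norm E p rt f) \<and>
     (\<forall>f\<in>l2m E p rt. (\<lambda>x. lam * R f x - Pop p (R f) x) = f) \<and>
     (\<forall>f\<in>l2m E p rt. R (\<lambda>x. lam * f x - Pop p f x) = f)"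

definition resolvent_set :: "('v \<Rightarrow> 'v \<Rightarrow> bool) \<Rightarrow> ('v \<Rightarrow> 'v \<Rightarrow> real) \<Rightarrow> 'v \<Rightarrow> complex set" where
  "resolvent_set E p rt = {lam. \<exists>R. is_resolvent E p rt lam R}"

definition green :: "('v \<Rightarrow> 'v \<Rightarrow> bool) \<Rightarrow> ('v \<Rightarrow> 'v \<Rightarrow> real) \<Rightarrow> 'v \<Rightarrow> complex \<Rightarrow> 'v \<Rightarrow> 'v \<Rightarrow> complex" where
  "green E p rt lam x y = (SOME R. is_resolvent E p rt lam R) (\<lambda>z. if z = y then 1 else 0) x"

definition res_star :: "('v \<Rightarrow> 'v \<Rightarrow> bool) \<Rightarrow> ('v \<Rightarrow> 'v \<Rightarrow> real) \<Rightarrow> 'v \<Rightarrow> complex set" where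
  "res_star E p rt = {lam \<in> resolvent_set E p rt. \<forall>x. green E p rt lam x x \<noteq> 0}"

definition is_ray :: "('v \<Rightarrow> 'v \<Rightarrow> bool) \<Rightarrow> (nat \<Rightarrow> 'v) \<Rightarrow> bool" where
  "is_ray E r \<longleftrightarrow> inj r \<and> (\<forall>n. E (r n) (r (Suc n)))"

definition ray_equiv :: "(nat \<Rightarrow> 'v) \<Rightarrow> (nat \<Rightarrow> 'v) \<Rightarrow> bool" where
  "ray_equiv r s \<longleftrightarrow> (\<exists>i j. \<forall>n. r (i + n) = s (j + n))"

definition ends :: "('v \<Rightarrow> 'v \<Rightarrow> bool) \<Rightarrow> (nat \<Rightarrow> 'v) set set" where
  "ends E = {{s. is_ray E s \<and> ray_equiv r s} | r. is_ray E r}"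

definition bdry_at :: "('v \<Rightarrow> 'v \<Rightarrow> bool) \<Rightarrow> 'v \<Rightarrow> 'v \<Rightarrow> (nat \<Rightarrow> 'v) set set" where
  "bdry_at E rt x = {\<xi> \<in> ends E. \<exists>r\<in>\<xi>. \<forall>n. r n \<in> subtree_at E rt x}"

definition ray_from :: "'v \<Rightarrow> (nat \<Rightarrow> 'v) set \<Rightarrow> (nat \<Rightarrow> 'v)" where
  "ray_from rt \<xi> = (THE r. r \<in> \<xi> \<and> r 0 = rt)"

definition conf_with :: "('v \<Rightarrow> 'v \<Rightarrow> bool) \<Rightarrow> 'v \<Rightarrow> 'v \<Rightarrow> 'v set \<Rightarrow> 'v" where
  "conf_with E rt x S = (let xs = geod E rt x in xs ! (GREATEST i. i < length xs \<and> xs!i \<in> S))"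

definition confv :: "('v \<Rightarrow> 'v \<Rightarrow> bool) \<Rightarrow> 'v \<Rightarrow> 'v \<Rightarrow> 'v \<Rightarrow> 'v" where
  "confv E rt x w = conf_with E rt x (set (geod E rt w))"

definition confe :: "('v \<Rightarrow> 'v \<Rightarrow> bool) \<Rightarrow> 'v \<Rightarrow> 'v \<Rightarrow> (nat \<Rightarrow> 'v) set \<Rightarrow> 'v" where
  "confe E rt x \<xi> = conf_with E rt x (range (ray_from rt \<xi>))"

definition Kv :: "('v \<Rightarrow> 'v \<Rightarrow> bool) \<Rightarrow> ('v \<Rightarrow> 'v \<Rightarrow> real) \<Rightarrow> 'v \<Rightarrow> complex \<Rightarrow> 'v \<Rightarrow> 'v \<Rightarrow> complex" where
  "Kv E p rt lam x w = green E p rt lam x (confv E rt x w) / green E p rt lam rt (confv E rt x w)"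

definition Ke :: "('v \<Rightarrow> 'v \<Rightarrow> bool) \<Rightarrow> ('v \<Rightarrow> 'v \<Rightarrow> real) \<Rightarrow> 'v \<Rightarrow> complex \<Rightarrow> 'v
    \<Rightarrow> (nat \<Rightarrow> 'v) set \<Rightarrow> complex" where
  "Ke E p rt lam x \<xi> = green E p rt lam x (confe E rt x \<xi>) / green E p rt lam rt (confe E rt x \<xi>)"

definition is_cdist :: "('v \<Rightarrow> 'v \<Rightarrow> bool) \<Rightarrow> 'v \<Rightarrow> ((nat \<Rightarrow> 'v) set set \<Rightarrow> complex) \<Rightarrow> bool" where
  "is_cdist E rt \<nu> \<longleftrightarrow> (\<forall>x.
     ((\<lambda>y. norm (\<nu> (bdry_at E rt y))) summable_on (children E rt x)) \<and>
     HAS_SUM (\<lambda>y. \<nu> (bdry_at E rt y)) (children E rt x) (\<nu> (bdry_at E rt x)))"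

definition root_subtree :: "('v \<Rightarrow> 'v \<Rightarrow> bool) \<Rightarrow> 'v \<Rightarrow> 'v set \<Rightarrow> bool" where
  "root_subtree E rt \<tau> \<longleftrightarrow> finite \<tau> \<and> rt \<in> \<tau> \<and> (\<forall>x\<in>\<tau>. set (geod E rt x) \<subseteq> \<tau>)"

definition Schildren :: "('v \<Rightarrow> 'v \<Rightarrow> bool) \<Rightarrow> 'v \<Rightarrow> 'v set \<Rightarrow> 'v \<Rightarrow> 'v set" where
  "Schildren E rt \<tau> x = {y \<in> \<tau>. y \<noteq> rt \<and> parent E rt y = x}"

definition loc_const_wit :: "('v \<Rightarrow> 'v \<Rightarrow> bool) \<Rightarrow> 'v \<Rightarrow> ((nat \<Rightarrow> 'v) set \<Rightarrow> complex)
    \<Rightarrow> 'v set \<Rightarrow> ('v \<Rightarrow> complex) \<Rightarrow> bool" where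
  "loc_const_wit E rt \<phi> \<tau> c \<longleftrightarrow> root_subtree E rt \<tau> \<and>
     (\<forall>x\<in>\<tau>. \<forall>\<xi> \<in> bdry_at E rt x - (\<Union>y\<in>Schildren E rt \<tau> x. bdry_at E rt y). \<phi> \<xi> = c x)"

definition bint :: "('v \<Rightarrow> 'v \<Rightarrow> bool) \<Rightarrow> 'v \<Rightarrow> ((nat \<Rightarrow> 'v) set \<Rightarrow> complex)
    \<Rightarrow> ((nat \<Rightarrow> 'v) set set \<Rightarrow> complex) \<Rightarrow> complex" where
  "bint E rt \<phi> \<nu> = (THE v. \<exists>\<tau> c. loc_const_wit E rt \<phi> \<tau> c \<and>
      v = (\<Sum>x\<in>\<tau>. c x * (\<nu> (bdry_at E rt x) - (\<Sum>y\<in>Schildren E rt \<tau> x. \<nu> (bdry_at E rt y)))))"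

end

theory Submission
  imports Defs
begin


lemma walk_single: "walk E [x]" by (simp add: walk_def)

lemma walk_snoc: "walk E xs \<Longrightarrow> E (last xs) y \<Longrightarrow> walk E (xs @ [y])"
proof -
  assume a: "walk E xs" "E (last xs) y"
  have "E ((xs @ [y]) ! i) ((xs @ [y]) ! Suc i)" if "Suc i < length (xs @ [y])" for i
  proof (cases "Suc i < length xs")
    case True then show ?thesis using a(1) unfolding walk_def by (simp add: nth_append)
  next
    case False
    then have "i = length xs - 1" "xs \<noteq> []" using that a(1) unfolding walk_def by auto
    then show ?thesis using a(2) False by (simp add: nth_append last_conv_nth)
  qed
  then show ?thesis unfolding walk_def by simp
qed

lemma walk_take: "walk E xs \<Longrightarrow> 0 < n \<Longrightarrow> walk E (take n xs)"
  unfolding walk_def by auto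

lemma walk_butlast: assumes "walk E xs" "2 \<le> length xs" shows "walk E (butlast xs)"
proof -
  have "butlast xs \<noteq> []" using assms(2) by (cases xs) auto
  then show ?thesis using assms(1) unfolding walk_def by (auto simp: nth_butlast)
qed

lemma last_take_Suc: "j < length xs \<Longrightarrow> last (take (Suc j) xs) = xs ! j"
  by (simp add: take_Suc_conv_app_nth)

lemma walk_nth: "walk E xs \<Longrightarrow> Suc i < length xs \<Longrightarrow> E (xs!i) (xs!Suc i)"
  unfolding walk_def by auto

locale tree_ctx =
  fixes E :: "'v \<Rightarrow> 'v \<Rightarrow> bool" and rt :: 'v
  assumes tree: "is_tree E"
begin

abbreviation "geo x \<equiv> geod E rt x"
abbreviation "par x \<equiv> parent E rt x"

lemma sym: "E x y \<Longrightarrow> E y x" using tree unfolding is_tree_def by blast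
lemma irrefl: "\<not> E x x" using tree unfolding is_tree_def by blast

lemma geod_props: "walk E (geod E x y) \<and> distinct (geod E x y) \<and> hd (geod E x y) = x \<and> last (geod E x y) = y"
proof -
  have "\<exists>!xs. walk E xs \<and> distinct xs \<and> hd xs = x \<and> last xs = y"
    using tree unfolding is_tree_def by blast
  then show ?thesis unfolding geod_def by (rule theI')
qed

lemma geod_unique: "walk E xs \<Longrightarrow> distinct xs \<Longrightarrow> hd xs = x \<Longrightarrow> last xs = y \<Longrightarrow> geod E x y = xs"
proof -
  assume a: "walk E xs" "distinct xs" "hd xs = x" "last xs = y"
  have "\<exists>!xs. walk E xs \<and> distinct xs \<and> hd xs = x \<and> last xs = y"
    using tree unfolding is_tree_def by blast
  then show ?thesis using a geod_props[of x y] by blast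
qed

lemma geo_walk: "walk E (geo x)" using geod_props by blast
lemma geo_distinct: "distinct (geo x)" using geod_props by blast
lemma geo_hd: "hd (geo x) = rt" using geod_props by blast
lemma geo_last: "last (geo x) = x" using geod_props by blast
lemma geo_ne: "geo x \<noteq> []" using geo_walk unfolding walk_def by blast
lemma geo_len_pos: "0 < length (geo x)" using geo_ne by simp
lemma geo_0: "geo x ! 0 = rt" using geo_hd geo_ne by (simp add: hd_conv_nth)
lemma geo_lastn: "geo x ! (length (geo x) - 1) = x" using geo_last geo_ne by (simp add: last_conv_nth)
lemma rt_in_geo: "rt \<in> set (geo x)" using geo_hd geo_ne hd_in_set by metis
lemma x_in_geo: "x \<in> set (geo x)" using geo_last geo_ne last_in_set by metis

lemma geo_rt: "geo rt = [rt]"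
  by (rule geod_unique) (auto simp: walk_def)

lemma geo_len1: "length (geo x) = 1 \<longleftrightarrow> x = rt"
proof
  assume "length (geo x) = 1"
  then obtain a where "geo x = [a]" by (metis One_nat_def length_0_conv length_Suc_conv)
  then show "x = rt" using geo_hd geo_last by (metis last_ConsL list.sel(1))
qed (simp add: geo_rt)

lemma geo_parent: assumes "x \<noteq> rt"
  shows "geo x = geo (par x) @ [x]" "E (par x) x"
proof -
  define xs where "xs = geo x"
  have "length (geo x) \<noteq> 1" using geo_len1[of x] assms by simp
  then have "2 \<le> length (geo x)" using geo_len_pos[of x] by linarith
  then have l2: "2 \<le> length xs" using xs_def by simp
  have pe: "par x = xs ! (length xs - 2)" unfolding parent_def xs_def Let_def by simp
  have bw: "walk E (butlast xs)" using walk_butlast geo_walk l2 xs_def by blast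
  have bd: "distinct (butlast xs)" using geo_distinct xs_def distinct_butlast by blast
  have bne: "butlast xs \<noteq> []" using l2 by (cases xs) auto
  have bh: "hd (butlast xs) = rt" using geo_hd[of x] l2 xs_def bne
    by (metis append_butlast_last_id hd_append2 list.size(3) not_numeral_le_zero)
  have bl: "last (butlast xs) = xs ! (length xs - 2)" using bne l2
    by (simp add: last_conv_nth nth_butlast numeral_2_eq_2)
  have "geo (par x) = butlast xs" using geod_unique[OF bw bd bh] bl pe by simp
  moreover have "xs = butlast xs @ [x]" using geo_last[of x] geo_ne[of x] xs_def by (metis append_butlast_last_id)
  ultimately show "geo x = geo (par x) @ [x]" using xs_def by simp
  have "Suc (length xs - 2) < length xs" using l2 by simp
  then have "E (xs ! (length xs - 2)) (xs ! Suc (length xs - 2))"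
    using walk_nth[OF geo_walk[of x]] xs_def by simp
  moreover have "Suc (length xs - 2) = length xs - 1" using l2 by simp
  ultimately show "E (par x) x" using pe geo_lastn[of x] xs_def by simp
qed

lemma geo_take: assumes "j < length (geo x)"
  shows "geo (geo x ! j) = take (Suc j) (geo x)"
proof (rule geod_unique)
  show "walk E (take (Suc j) (geo x))" using walk_take geo_walk by blast
  show "distinct (take (Suc j) (geo x))" using geo_distinct by simp
  show "hd (take (Suc j) (geo x)) = rt" using geo_hd geo_ne by (simp add: hd_take)
  show "last (take (Suc j) (geo x)) = geo x ! j" using assms
    by (simp add: last_take_Suc)
qed

lemma adj_cases: assumes "E x y"
  shows "(y \<noteq> rt \<and> par y = x) \<or> (x \<noteq> rt \<and> par x = y)"
proof (cases "y \<in> set (geo x)")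
  case False
  define zs where "zs = geo x @ [y]"
  have "geo y = zs" unfolding zs_def
    apply (rule geod_unique)
    using walk_snoc[OF geo_walk] geo_last assms geo_distinct False geo_hd geo_ne by auto
  moreover have "y \<noteq> rt" using False rt_in_geo by blast
  ultimately have "y \<noteq> rt \<and> par y = x"
    unfolding parent_def Let_def zs_def using geo_lastn[of x] geo_len_pos[of x]
    by (simp add: nth_append)
  then show ?thesis by blast
next
  case True
  define xs where "xs = geo x"
  define n where "n = length xs"
  obtain j where j: "j < n" "xs ! j = y" using True xs_def n_def by (metis in_set_conv_nth)
  have "y \<noteq> x" using assms irrefl by blast
  then have jn: "j \<noteq> n - 1" using j geo_lastn[of x] xs_def n_def by auto
  show ?thesis
  proof (cases "j = n - 2")
    case True
    have "x \<noteq> rt" using j jn geo_rt xs_def n_def by auto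
    moreover have "par x = y" unfolding parent_def Let_def using True j xs_def n_def by simp
    ultimately show ?thesis by blast
  next
    case False
    with j jn have jl: "j + 2 < n" by linarith
    define zs where "zs = take (Suc j) xs @ [x]"
    have tl: "last (take (Suc j) xs) = y" using j last_take_Suc[of j xs] n_def by simp
    have xnot: "x \<notin> set (take (Suc j) xs)"
    proof -
      have "last (drop (Suc j) xs) = x" using jl n_def geo_last xs_def by (simp add: last_drop)
      moreover have "drop (Suc j) xs \<noteq> []" using jl n_def by simp
      ultimately have "x \<in> set (drop (Suc j) xs)" using last_in_set by metis
      moreover have "distinct (take (Suc j) xs @ drop (Suc j) xs)" using geo_distinct xs_def by simp
      ultimately show ?thesis by (auto simp del: append_take_drop_id)
    qed
    have "geo x = zs" unfolding zs_def
      apply (rule geod_unique)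
      subgoal using walk_snoc[OF walk_take[OF geo_walk]] tl sym assms xs_def by auto
      subgoal using geo_distinct xnot xs_def by auto
      subgoal using geo_hd geo_ne xs_def by (simp add: hd_take)
      subgoal by simp
      done
    then have "length (geo x) = length zs" by simp
    moreover have "length zs = Suc (Suc j)" unfolding zs_def using j n_def by simp
    ultimately have "n = Suc j + 1" using xs_def n_def by simp
    then show ?thesis using jl by simp
  qed
qed

end


context tree_ctx begin

lemma children_iff: "y \<in> children E rt x \<longleftrightarrow> y \<noteq> rt \<and> par y = x"
  unfolding children_def by simp

lemma sub_iff: "w \<in> subtree_at E rt z \<longleftrightarrow> z \<in> set (geo w)"
  unfolding subtree_at_def by simp

lemma child_geo: "y \<noteq> rt \<Longrightarrow> par y = x \<Longrightarrow> geo y = geo x @ [y]"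
  using geo_parent by blast

lemma child_E: "y \<noteq> rt \<Longrightarrow> par y = x \<Longrightarrow> E x y"
  using geo_parent by blast

lemma child_len: "y \<noteq> rt \<Longrightarrow> par y = x \<Longrightarrow> length (geo y) = Suc (length (geo x))"
  using child_geo by simp

lemma geo_nth_parent: assumes "j < length (geo x)" "0 < j"
  shows "geo x ! j \<noteq> rt \<and> par (geo x ! j) = geo x ! (j - 1)"
proof
  have "distinct (geo x)" "0 < length (geo x)" using geo_distinct geo_len_pos by auto
  then have "geo x ! j = geo x ! 0 \<Longrightarrow> j = 0"
    using assms by (simp add: nth_eq_iff_index_eq)
  then show "geo x ! j \<noteq> rt" using geo_0[of x] assms by auto
  have t: "geo (geo x ! j) = take (Suc j) (geo x)" using geo_take assms by blast
  have l: "length (take (Suc j) (geo x)) - 2 = j - 1" using assms by simp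
  show "par (geo x ! j) = geo x ! (j - 1)"
    unfolding parent_def Let_def t l using assms by simp
qed

lemma nb_sub: assumes "v \<in> subtree_at E rt u" "E v w"
  shows "w \<in> subtree_at E rt u \<or> (u \<noteq> rt \<and> w = par u)"
  using adj_cases[OF assms(2)]
proof
  assume "w \<noteq> rt \<and> par w = v"
  then have "geo w = geo v @ [w]" using child_geo by blast
  then show ?thesis using assms(1) by (simp add: sub_iff)
next
  assume a: "v \<noteq> rt \<and> par v = w"
  then have g: "geo v = geo w @ [v]" using child_geo by blast
  show ?thesis
  proof (cases "u = v")
    case True then show ?thesis using a by blast
  next
    case False then show ?thesis using assms(1) g by (simp add: sub_iff)
  qed
qed

lemma nb_nsub: assumes "v \<notin> subtree_at E rt x" "E v w"
  shows "w \<notin> subtree_at E rt x \<or> w = x"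
  using adj_cases[OF assms(2)]
proof
  assume "w \<noteq> rt \<and> par w = v"
  then have "geo w = geo v @ [w]" using child_geo by blast
  then show ?thesis using assms(1) by (auto simp: sub_iff)
next
  assume a: "v \<noteq> rt \<and> par v = w"
  then have g: "geo v = geo w @ [v]" using child_geo by blast
  then show ?thesis using assms(1) by (auto simp: sub_iff)
qed

lemma in_geo_len: assumes "z \<in> set (geo x)" shows "length (geo z) \<le> length (geo x)"
proof -
  obtain j where "j < length (geo x)" "geo x ! j = z" using assms by (metis in_set_conv_nth)
  then show ?thesis using geo_take[of j x] by simp
qed

lemma sibling_nsub: assumes "y \<noteq> rt" "par y = x" "u \<noteq> rt" "par u = x" "u \<noteq> y"
  shows "y \<notin> subtree_at E rt u"
proof
  assume "y \<in> subtree_at E rt u"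
  then have "u \<in> set (geo x @ [y])" using child_geo assms by (simp add: sub_iff)
  then have "u \<in> set (geo x)" using assms by simp
  then have "length (geo u) \<le> length (geo x)" by (rule in_geo_len)
  then show False using child_len[of u x] assms by simp
qed

lemma child_sub: "y \<noteq> rt \<Longrightarrow> par y = x \<Longrightarrow> y \<in> subtree_at E rt x"
  using child_geo x_in_geo by (simp add: sub_iff)

lemma self_sub: "x \<in> subtree_at E rt x"
  using x_in_geo by (simp add: sub_iff)

lemma par_nsub: assumes "x \<noteq> rt" shows "par x \<notin> subtree_at E rt x"
proof
  assume "par x \<in> subtree_at E rt x"
  then have "x \<in> set (geo (par x))" by (simp add: sub_iff)
  then have "length (geo x) \<le> length (geo (par x))" by (rule in_geo_len)
  then show False using child_len[of x "par x"] assms by simp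
qed

lemma rt_nsub: assumes "x \<noteq> rt" shows "rt \<notin> subtree_at E rt x"
  using assms by (simp add: sub_iff geo_rt)

lemma has_child:
  assumes nb: "\<And>x. \<exists>y. E x y" and nl: "no_leaves E"
  shows "\<exists>y. y \<noteq> rt \<and> par y = x"
proof (cases "x = rt")
  case True
  obtain y where "E x y" using nb by blast
  then show ?thesis using adj_cases True by blast
next
  case False
  have "\<not> (\<exists>!y. E x y)" using nl unfolding no_leaves_def by blast
  moreover have "E x (par x)" using geo_parent[OF False] sym by blast
  ultimately obtain y where "E x y" "y \<noteq> par x" by blast
  then show ?thesis using adj_cases by blast
qed

definition desc :: "(nat \<Rightarrow> 'v) \<Rightarrow> bool" where
  "desc r \<longleftrightarrow> (\<forall>n. r (Suc n) \<noteq> rt \<and> par (r (Suc n)) = r n)"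

lemma desc_geo: assumes "desc r" "r 0 = rt" shows "geo (r n) = map r [0..<Suc n]"
proof (induction n)
  case 0 then show ?case using assms geo_rt by simp
next
  case (Suc n)
  have "r (Suc n) \<noteq> rt" "par (r (Suc n)) = r n" using assms(1) unfolding desc_def by auto
  then have "geo (r (Suc n)) = geo (r n) @ [r (Suc n)]" by (rule child_geo)
  then show ?case using Suc by simp
qed

lemma desc_len: assumes "desc r" "r 0 = rt" shows "length (geo (r n)) = Suc n"
  using desc_geo[OF assms] by simp

lemma desc_inj: assumes "desc r" "r 0 = rt" shows "inj r"
proof (rule injI)
  fix a b assume ab: "r a = r b"
  have "Suc a = length (geo (r a))" using desc_len[OF assms, of a] by simp
  also have "\<dots> = length (geo (r b))" using ab by simp
  also have "\<dots> = Suc b" using desc_len[OF assms, of b] by simp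
  finally show "a = b" by simp
qed

lemma desc_ray: assumes "desc r" "r 0 = rt" shows "is_ray E r"
proof -
  have "E (r n) (r (Suc n))" for n
  proof -
    have "r (Suc n) \<noteq> rt" "par (r (Suc n)) = r n" using assms(1) unfolding desc_def by auto
    then show ?thesis by (rule child_E)
  qed
  then show ?thesis unfolding is_ray_def using desc_inj[OF assms] by blast
qed

lemma ray_step: assumes "is_ray E s" "s (Suc n) \<noteq> rt \<and> par (s (Suc n)) = s n"
  shows "s (Suc (Suc n)) \<noteq> rt \<and> par (s (Suc (Suc n))) = s (Suc n)"
proof -
  have "E (s (Suc n)) (s (Suc (Suc n)))" using assms(1) unfolding is_ray_def by blast
  from adj_cases[OF this] show ?thesis
  proof
    assume "s (Suc n) \<noteq> rt \<and> par (s (Suc n)) = s (Suc (Suc n))"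
    then have "s (Suc (Suc n)) = s n" using assms(2) by simp
    moreover have "inj s" using assms(1) unfolding is_ray_def by blast
    ultimately show ?thesis by (simp add: inj_eq)
  qed
qed

lemma ray_rt_desc: assumes "is_ray E r" "r 0 = rt" shows "desc r"
proof -
  have "r (Suc n) \<noteq> rt \<and> par (r (Suc n)) = r n" for n
  proof (induction n)
    case 0
    have "E (r 0) (r (Suc 0))" using assms(1) unfolding is_ray_def by blast
    from adj_cases[OF this] show ?case using assms(2) by simp
  next
    case (Suc n) then show ?case using ray_step[OF assms(1) Suc] by simp
  qed
  then show ?thesis unfolding desc_def by blast
qed

lemma ray_equiv_refl: "ray_equiv r r"
  unfolding ray_equiv_def by (rule exI[of _ 0], rule exI[of _ 0]) simp

lemma ray_equiv_sym: assumes "ray_equiv r s" shows "ray_equiv s r"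
proof -
  obtain i j where "\<forall>n. r (i + n) = s (j + n)" using assms unfolding ray_equiv_def by blast
  then show ?thesis unfolding ray_equiv_def by (intro exI[of _ j] exI[of _ i]) simp
qed

lemma ray_equiv_trans: assumes "ray_equiv r s" "ray_equiv s t" shows "ray_equiv r t"
proof -
  obtain i j where ij: "\<forall>n. r (i + n) = s (j + n)" using assms(1) unfolding ray_equiv_def by blast
  obtain j' k where jk: "\<forall>n. s (j' + n) = t (k + n)" using assms(2) unfolding ray_equiv_def by blast
  define a where "a = max j j'"
  have "r (i + (a - j) + n) = t (k + (a - j') + n)" for n
  proof -
    have "r (i + (a - j) + n) = s (j + ((a - j) + n))" using ij by (metis add.assoc)
    also have "\<dots> = s (j' + ((a - j') + n))" unfolding a_def by (simp add: max_def)
    also have "\<dots> = t (k + (a - j') + n)" using jk by (metis add.assoc)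
    finally show ?thesis .
  qed
  then show ?thesis unfolding ray_equiv_def by blast
qed

lemma ends_class: assumes "\<xi> \<in> ends E" "s \<in> \<xi>"
  shows "\<xi> = {t. is_ray E t \<and> ray_equiv s t}" "is_ray E s"
proof -
  obtain r0 where r0: "is_ray E r0" "\<xi> = {t. is_ray E t \<and> ray_equiv r0 t}"
    using assms(1) unfolding ends_def by blast
  then have "ray_equiv r0 s" "is_ray E s" using assms(2) by auto
  then show "\<xi> = {t. is_ray E t \<and> ray_equiv s t}" "is_ray E s"
    using r0 ray_equiv_trans ray_equiv_sym by blast+
qed

lemma ends_mem_equiv: "\<xi> \<in> ends E \<Longrightarrow> s \<in> \<xi> \<Longrightarrow> t \<in> \<xi> \<Longrightarrow> ray_equiv s t"
  using ends_class by blast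

lemma ends_mem_intro: "\<xi> \<in> ends E \<Longrightarrow> s \<in> \<xi> \<Longrightarrow> is_ray E t \<Longrightarrow> ray_equiv s t \<Longrightarrow> t \<in> \<xi>"
  using ends_class by blast

lemma end_has_rt_ray: assumes "\<xi> \<in> ends E" shows "\<exists>r \<in> \<xi>. r 0 = rt"
proof -
  obtain s0 where "is_ray E s0" "\<xi> = {t. is_ray E t \<and> ray_equiv s0 t}"
    using assms unfolding ends_def by blast
  then have s: "s \<in> \<xi>" "is_ray E s" if "s = s0" for s using ray_equiv_refl that by auto
  define s where "s = s0"
  have s\<xi>: "s \<in> \<xi>" and sr: "is_ray E s" using s s_def by auto
  obtain m where m: "\<forall>n. length (geo (s m)) \<le> length (geo (s n))"
    using ex_has_least_nat[of "\<lambda>_. True" 0 "\<lambda>n. length (geo (s n))"] by blast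
  have step0: "s (Suc m) \<noteq> rt \<and> par (s (Suc m)) = s m"
  proof -
    have "E (s m) (s (Suc m))" using sr unfolding is_ray_def by blast
    from adj_cases[OF this] show ?thesis
    proof
      assume "s m \<noteq> rt \<and> par (s m) = s (Suc m)"
      then have "length (geo (s m)) = Suc (length (geo (s (Suc m))))" using child_len by blast
      then show ?thesis using m by (metis Suc_n_not_le_n)
    qed
  qed
  have stepk: "s (Suc (m + k)) \<noteq> rt \<and> par (s (Suc (m + k))) = s (m + k)" for k
  proof (induction k)
    case 0 then show ?case using step0 by simp
  next
    case (Suc k) then show ?case using ray_step[OF sr, of "m + k"] by simp
  qed
  define xs where "xs = geo (s m)"
  define L where "L = length xs"
  have L0: "0 < L" using geo_len_pos L_def xs_def by simp
  define r where "r n = (if n < L then xs ! n else s (m + (n - (L - 1))))" for n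
  have r0: "r 0 = rt" using L0 geo_0 unfolding r_def xs_def by simp
  have xsl: "xs ! (L - 1) = s m" using geo_lastn xs_def L_def by simp
  have "r (Suc n) \<noteq> rt \<and> par (r (Suc n)) = r n" for n
  proof -
    consider "Suc n < L" | "Suc n = L" | "Suc n > L" by linarith
    then show ?thesis
    proof cases
      case 1 then show ?thesis using geo_nth_parent[of "Suc n" "s m"] unfolding r_def xs_def L_def by simp
    next
      case 2
      then have "r (Suc n) = s (Suc m)" "r n = s m" unfolding r_def using xsl by auto
      then show ?thesis using step0 by simp
    next
      case 3
      then have "r (Suc n) = s (Suc (m + (n - (L - 1))))" "r n = s (m + (n - (L - 1)))"
        unfolding r_def by (auto simp: Suc_diff_le)
      then show ?thesis using stepk by simp
    qed
  qed
  then have rd: "desc r" unfolding desc_def by blast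
  have rr: "is_ray E r" using desc_ray[OF rd r0] .
  have "s (m + n) = r (L - 1 + n)" for n
  proof (cases n)
    case 0 then show ?thesis unfolding r_def using xsl L0 by simp
  next
    case (Suc k) then show ?thesis unfolding r_def using L0 by simp
  qed
  then have "ray_equiv s r" unfolding ray_equiv_def by blast
  then have "r \<in> \<xi>" using ends_mem_intro[OF assms s\<xi> rr] by blast
  then show ?thesis using r0 by blast
qed

lemma rt_ray_unique: assumes "\<xi> \<in> ends E" "r \<in> \<xi>" "r 0 = rt" "r' \<in> \<xi>" "r' 0 = rt"
  shows "r = r'"
proof -
  have rr: "is_ray E r" "is_ray E r'" using ends_class assms by blast+
  have d: "desc r" "desc r'" using ray_rt_desc rr assms by blast+
  obtain i j where ij: "\<forall>n. r (i + n) = r' (j + n)"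
    using ends_mem_equiv[OF assms(1,2,4)] unfolding ray_equiv_def by blast
  have "geo (r i) = geo (r' j)" using ij by (metis add_0_right)
  moreover have "geo (r i) = map r [0..<Suc i]" by (rule desc_geo[OF d(1) assms(3)])
  moreover have "geo (r' j) = map r' [0..<Suc j]" by (rule desc_geo[OF d(2) assms(5)])
  ultimately have eq: "map r [0..<Suc i] = map r' [0..<Suc j]" by simp
  then have "length (map r [0..<Suc i]) = length (map r' [0..<Suc j])" by simp
  then have "i = j" by simp
  show ?thesis
  proof
    fix k show "r k = r' k"
    proof (cases "k \<le> i")
      case True
      then have "map r [0..<Suc i] ! k = map r' [0..<Suc j] ! k" using eq by simp
      then show ?thesis using True \<open>i = j\<close> by (simp del: upt_Suc)
    next
      case False
      then have "r (i + (k - i)) = r' (j + (k - i))" using ij by blast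
      then show ?thesis using False \<open>i = j\<close> by simp
    qed
  qed
qed

lemma ray_from_props: assumes "\<xi> \<in> ends E"
  shows "ray_from rt \<xi> \<in> \<xi>" "ray_from rt \<xi> 0 = rt" "desc (ray_from rt \<xi>)"
    "\<And>n. geo (ray_from rt \<xi> n) = map (ray_from rt \<xi>) [0..<Suc n]"
proof -
  have "\<exists>!r. r \<in> \<xi> \<and> r 0 = rt" using end_has_rt_ray[OF assms] rt_ray_unique[OF assms] by blast
  then have a: "ray_from rt \<xi> \<in> \<xi> \<and> ray_from rt \<xi> 0 = rt" unfolding ray_from_def by (rule theI')
  then show "ray_from rt \<xi> \<in> \<xi>" "ray_from rt \<xi> 0 = rt" by auto
  have "is_ray E (ray_from rt \<xi>)" using a ends_class assms by blast
  then show d: "desc (ray_from rt \<xi>)" using ray_rt_desc a by blast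
  show "\<And>n. geo (ray_from rt \<xi> n) = map (ray_from rt \<xi>) [0..<Suc n]" using desc_geo[OF d] a by blast
qed

lemma bdry_char: assumes "\<xi> \<in> ends E"
  shows "\<xi> \<in> bdry_at E rt z \<longleftrightarrow> z \<in> range (ray_from rt \<xi>)"
proof -
  define r where "r = ray_from rt \<xi>"
  note rp = ray_from_props[OF assms, folded r_def]
  show ?thesis unfolding r_def[symmetric]
  proof
    assume "\<xi> \<in> bdry_at E rt z"
    then obtain r' where r': "r' \<in> \<xi>" "\<forall>n. r' n \<in> subtree_at E rt z" unfolding bdry_at_def by blast
    obtain i j where ij: "\<forall>n. r (i + n) = r' (j + n)"
      using ends_mem_equiv[OF assms rp(1) r'(1)] unfolding ray_equiv_def by blast
    have "z \<in> set (geo (r' j))" using r'(2) by (simp add: sub_iff)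
    also have "r' j = r i" using ij by (metis add_0_right)
    finally have "z \<in> set (map r [0..<Suc i])" using rp(4) by simp
    then show "z \<in> range r" by auto
  next
    assume "z \<in> range r"
    then obtain k where k: "z = r k" by blast
    define t where "t n = r (k + n)" for n
    have rr: "is_ray E r" using desc_ray rp by blast
    have "inj t" using rr unfolding is_ray_def t_def inj_def by (metis add_left_cancel)
    moreover have "E (t n) (t (Suc n))" for n using rr unfolding is_ray_def t_def by simp
    ultimately have tr: "is_ray E t" unfolding is_ray_def by blast
    have "ray_equiv r t" unfolding ray_equiv_def t_def by (rule exI[of _ k], rule exI[of _ 0]) simp
    then have "t \<in> \<xi>" using ends_mem_intro[OF assms rp(1) tr] by blast
    moreover have "t n \<in> subtree_at E rt z" for n
      unfolding sub_iff t_def k rp(4)[of "k + n"] by (simp del: upt_Suc)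
    ultimately show "\<xi> \<in> bdry_at E rt z" unfolding bdry_at_def using assms by blast
  qed
qed

lemma bdry_ends: "\<xi> \<in> bdry_at E rt z \<Longrightarrow> \<xi> \<in> ends E"
  unfolding bdry_at_def by blast

lemma bdry_par: assumes "\<xi> \<in> bdry_at E rt y" "y \<noteq> rt" shows "\<xi> \<in> bdry_at E rt (par y)"
proof -
  have e: "\<xi> \<in> ends E" using assms bdry_ends by blast
  define r where "r = ray_from rt \<xi>"
  note rp = ray_from_props[OF e, folded r_def]
  obtain n where n: "y = r n" using assms bdry_char[OF e] r_def by blast
  have "n \<noteq> 0"
  proof
    assume "n = 0" then show False using n rp(2) assms(2) by simp
  qed
  then have "par y = r (n - 1)" using rp(3) n unfolding desc_def by (metis Suc_pred' not_gr0)
  then show ?thesis using bdry_char[OF e] r_def by blast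
qed

lemma bdry_sibling: assumes "\<xi> \<in> bdry_at E rt y" "\<xi> \<in> bdry_at E rt w" "length (geo y) = length (geo w)"
  shows "y = w"
proof -
  have e: "\<xi> \<in> ends E" using assms bdry_ends by blast
  define r where "r = ray_from rt \<xi>"
  note rp = ray_from_props[OF e, folded r_def]
  obtain a b where "y = r a" "w = r b" using assms bdry_char[OF e] r_def by blast
  then show ?thesis using assms(3) rp(4) by simp
qed

lemma bdry_nonempty:
  assumes hc: "\<And>x. \<exists>y. y \<noteq> rt \<and> par y = x"
  shows "bdry_at E rt z \<noteq> {}"
proof -
  define s where "s = rec_nat z (\<lambda>_ x. SOME y. y \<noteq> rt \<and> par y = x)"
  have s0: "s 0 = z" unfolding s_def by simp
  have sS: "s (Suc n) \<noteq> rt \<and> par (s (Suc n)) = s n" for n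
  proof -
    have "s (Suc n) = (SOME y. y \<noteq> rt \<and> par y = s n)" unfolding s_def by simp
    then show ?thesis using someI_ex[OF hc[of "s n"]] by simp
  qed
  have len: "length (geo (s n)) = length (geo z) + n" for n
    by (induction n) (auto simp: s0 child_len[OF sS[THEN conjunct1] sS[THEN conjunct2]])
  have zin: "z \<in> set (geo (s n))" for n
  proof (induction n)
    case 0 then show ?case using s0 x_in_geo by simp
  next
    case (Suc n) then show ?case using child_geo[OF sS[THEN conjunct1] sS[THEN conjunct2]] by simp
  qed
  have "inj s" by (rule injI) (metis len add_left_cancel)
  moreover have "E (s n) (s (Suc n))" for n using child_E sS by blast
  ultimately have sr: "is_ray E s" unfolding is_ray_def by blast
  define \<xi> where "\<xi> = {t. is_ray E t \<and> ray_equiv s t}"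
  have e: "\<xi> \<in> ends E" unfolding \<xi>_def ends_def using sr by blast
  have "s \<in> \<xi>" unfolding \<xi>_def using sr ray_equiv_refl by blast
  then have "\<xi> \<in> bdry_at E rt z" unfolding bdry_at_def using e zin by (auto simp: sub_iff)
  then show ?thesis by blast
qed

lemma confe_path: assumes e: "\<xi> \<in> ends E" and i: "i < length (geo x)"
  and inb: "\<xi> \<in> bdry_at E rt (geo x ! i)"
  and nb: "Suc i < length (geo x) \<Longrightarrow> \<xi> \<notin> bdry_at E rt (geo x ! Suc i)"
  shows "confe E rt x \<xi> = geo x ! i"
proof -
  define r where "r = ray_from rt \<xi>"
  note rp = ray_from_props[OF e, folded r_def]
  define xs where "xs = geo x"
  obtain a where a: "xs ! i = r a" using inb bdry_char[OF e] r_def xs_def by blast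
  have tk0: "take (Suc i) xs = map r [0..<Suc a]" using geo_take[of i x] rp(4)[of a] a i xs_def by simp
  have "length (take (Suc i) xs) = Suc i" using i xs_def by simp
  then have ai: "a = i" using tk0 by simp
  have tk: "xs ! j = r j" if "j \<le> i" for j
  proof -
    have "take (Suc i) xs ! j = map r [0..<Suc a] ! j" using tk0 by simp
    then show ?thesis using that ai by (simp del: upt_Suc add: nth_append)
  qed
  have key: "xs ! j \<in> range r \<longleftrightarrow> j \<le> i" if j: "j < length xs" for j
  proof
    assume "j \<le> i" then show "xs ! j \<in> range r" using tk by simp
  next
    assume "xs ! j \<in> range r"
    then obtain b where b: "xs ! j = r b" by blast
    have tb: "take (Suc j) xs = map r [0..<Suc b]" using geo_take[of j x] rp(4)[of b] b j xs_def by simp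
    show "j \<le> i"
    proof (rule ccontr)
      assume "\<not> j \<le> i"
      then have "Suc i < length xs" "Suc i < Suc j" using j by auto
      moreover have "length (take (Suc j) xs) = Suc j" using j by simp
      then have "Suc j = Suc b" using tb by simp
      ultimately have "take (Suc j) xs ! Suc i = r (Suc i)" using tb by (simp del: upt_Suc)
      then have "xs ! Suc i = r (Suc i)" using \<open>Suc i < Suc j\<close> by simp
      then have "\<xi> \<in> bdry_at E rt (xs ! Suc i)" using bdry_char[OF e] r_def by blast
      then show False using nb \<open>Suc i < length xs\<close> xs_def by simp
    qed
  qed
  have "(GREATEST j. j < length xs \<and> xs ! j \<in> range r) = i"
    by (rule Greatest_equality) (use key i xs_def in auto)
  then show ?thesis unfolding confe_def conf_with_def Let_def r_def xs_def by simp
qed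

lemma confv_path: assumes i: "i < length (geo x)"
  shows "confv E rt x (geo x ! i) = geo x ! i"
proof -
  define xs where "xs = geo x"
  have s: "set (geo (xs ! i)) = set (take (Suc i) xs)" using geo_take i xs_def by simp
  have key: "xs ! j \<in> set (take (Suc i) xs) \<longleftrightarrow> j \<le> i" if j: "j < length xs" for j
  proof
    assume "j \<le> i" then show "xs ! j \<in> set (take (Suc i) xs)" using j
      by (metis in_set_conv_nth length_take less_Suc_eq_le min_less_iff_conj nth_take)
  next
    assume "xs ! j \<in> set (take (Suc i) xs)"
    then obtain k where k: "k < length (take (Suc i) xs)" "take (Suc i) xs ! k = xs ! j"
      by (metis in_set_conv_nth)
    then have "xs ! k = xs ! j" "k \<le> i" "k < length xs" by auto
    then have "k = j" using geo_distinct xs_def j nth_eq_iff_index_eq by metis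
    then show "j \<le> i" using \<open>k \<le> i\<close> by simp
  qed
  have "(GREATEST j. j < length xs \<and> xs ! j \<in> set (take (Suc i) xs)) = i"
    by (rule Greatest_equality) (use key i xs_def in auto)
  then show ?thesis unfolding confv_def conf_with_def Let_def s[unfolded xs_def] xs_def by simp
qed

end


locale dist_ctx = tree_ctx E rt for E :: "'v \<Rightarrow> 'v \<Rightarrow> bool" and rt +
  fixes \<nu> :: "(nat \<Rightarrow> 'v) set set \<Rightarrow> complex"
  assumes cdist: "is_cdist E rt \<nu>"
    and hc: "\<And>x. \<exists>y. y \<noteq> rt \<and> par y = x"
begin

abbreviation "bd x \<equiv> bdry_at E rt x"
abbreviation "Sch \<tau> x \<equiv> Schildren E rt \<tau> x"

definition val :: "'v set \<Rightarrow> ('v \<Rightarrow> complex) \<Rightarrow> complex" where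
  "val \<tau> c = (\<Sum>x\<in>\<tau>. c x * (\<nu> (bd x) - (\<Sum>y\<in>Sch \<tau> x. \<nu> (bd y))))"

lemma Sch_eq: "Sch \<tau> x = {y \<in> \<tau> - {rt}. par y = x}"
  unfolding Schildren_def by auto

lemma rs_par: "root_subtree E rt \<tau> \<Longrightarrow> z \<in> \<tau> \<Longrightarrow> z \<noteq> rt \<Longrightarrow> par z \<in> \<tau>"
  unfolding root_subtree_def using geo_parent x_in_geo by fastforce

lemma val_abel: assumes "root_subtree E rt \<tau>"
  shows "val \<tau> c = c rt * \<nu> (bd rt) + (\<Sum>z\<in>\<tau> - {rt}. (c z - c (par z)) * \<nu> (bd z))"
proof -
  have fin: "finite \<tau>" and rt: "rt \<in> \<tau>" using assms unfolding root_subtree_def by auto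
  have "(\<Sum>x\<in>\<tau>. c x * (\<Sum>y\<in>Sch \<tau> x. \<nu> (bd y))) = (\<Sum>x\<in>\<tau>. (\<Sum>y\<in>{y \<in> \<tau> - {rt}. par y = x}. c (par y) * \<nu> (bd y)))"
    unfolding Sch_eq by (auto simp: sum_distrib_left intro!: sum.cong)
  also have "\<dots> = (\<Sum>y\<in>\<tau> - {rt}. c (par y) * \<nu> (bd y))"
    by (rule sum.group) (use fin rs_par[OF assms] in auto)
  finally have A: "(\<Sum>x\<in>\<tau>. c x * (\<Sum>y\<in>Sch \<tau> x. \<nu> (bd y))) = (\<Sum>y\<in>\<tau> - {rt}. c (par y) * \<nu> (bd y))" .
  have B: "(\<Sum>x\<in>\<tau>. c x * \<nu> (bd x)) = c rt * \<nu> (bd rt) + (\<Sum>x\<in>\<tau> - {rt}. c x * \<nu> (bd x))"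
    using fin rt by (simp add: sum.remove)
  show ?thesis unfolding val_def using A B
    by (simp add: right_diff_distrib left_diff_distrib sum_subtractf)
qed

lemma extend_one:
  assumes w: "loc_const_wit E rt \<phi> \<tau> c" and y: "y \<notin> \<tau>" "y \<noteq> rt" "par y \<in> \<tau>"
  shows "loc_const_wit E rt \<phi> (insert y \<tau>) (c(y := c (par y))) \<and>
         val (insert y \<tau>) (c(y := c (par y))) = val \<tau> c"
proof -
  have rs: "root_subtree E rt \<tau>" using w unfolding loc_const_wit_def by blast
  have fin: "finite \<tau>" and rt: "rt \<in> \<tau>" and cl: "\<And>z. z \<in> \<tau> \<Longrightarrow> set (geo z) \<subseteq> \<tau>"
    using rs unfolding root_subtree_def by auto
  define c' where "c' = c(y := c (par y))"
  have py: "par y \<noteq> y" using y(3) y(1) by auto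
  have rs': "root_subtree E rt (insert y \<tau>)"
    unfolding root_subtree_def using fin rt cl geo_parent(1)[OF y(2)] cl[OF y(3)] by auto
  have wit: "\<phi> \<xi> = c' x" if x: "x \<in> insert y \<tau>"
    and \<xi>: "\<xi> \<in> bd x - (\<Union>w\<in>Sch (insert y \<tau>) x. bd w)" for x \<xi>
  proof (cases "x = y")
    case True
    have \<xi>y: "\<xi> \<in> bd y" using \<xi> True by blast
    have "\<xi> \<in> bd (par y)" using bdry_par[OF \<xi>y y(2)] .
    moreover have "\<xi> \<notin> bd w" if "w \<in> Sch \<tau> (par y)" for w
    proof
      assume "\<xi> \<in> bd w"
      moreover have "length (geo y) = length (geo w)"
        using that child_len[of y "par y"] child_len[of w "par y"] y(2) unfolding Schildren_def by auto
      ultimately have "y = w" using bdry_sibling \<xi>y by blast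
      then show False using that y(1) unfolding Schildren_def by blast
    qed
    ultimately have "\<phi> \<xi> = c (par y)" using w y(3) unfolding loc_const_wit_def by blast
    then show ?thesis using True c'_def by simp
  next
    case False
    then have "x \<in> \<tau>" using x by blast
    moreover have "Sch \<tau> x \<subseteq> Sch (insert y \<tau>) x" unfolding Schildren_def by blast
    ultimately have "\<phi> \<xi> = c x" using w \<xi> unfolding loc_const_wit_def by blast
    then show ?thesis using False c'_def by simp
  qed
  have lw: "loc_const_wit E rt \<phi> (insert y \<tau>) c'" unfolding loc_const_wit_def using rs' wit by blast
  have "val (insert y \<tau>) c' = c' rt * \<nu> (bd rt) + (\<Sum>z\<in>insert y \<tau> - {rt}. (c' z - c' (par z)) * \<nu> (bd z))"
    by (rule val_abel[OF rs'])
  also have "insert y \<tau> - {rt} = insert y (\<tau> - {rt})" using y by auto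
  also have "(\<Sum>z\<in>insert y (\<tau> - {rt}). (c' z - c' (par z)) * \<nu> (bd z))
      = (c' y - c' (par y)) * \<nu> (bd y) + (\<Sum>z\<in>\<tau> - {rt}. (c' z - c' (par z)) * \<nu> (bd z))"
    using fin y by (simp add: sum.insert)
  also have "(c' y - c' (par y)) = 0" using py c'_def by simp
  also have "(\<Sum>z\<in>\<tau> - {rt}. (c' z - c' (par z)) * \<nu> (bd z)) = (\<Sum>z\<in>\<tau> - {rt}. (c z - c (par z)) * \<nu> (bd z))"
  proof (rule sum.cong)
    fix z assume "z \<in> \<tau> - {rt}"
    moreover then have "par z \<in> \<tau>" using rs_par[OF rs] by blast
    ultimately show "(c' z - c' (par z)) * \<nu> (bd z) = (c z - c (par z)) * \<nu> (bd z)"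
      using y(1) c'_def by auto
  qed simp
  also have "c' rt = c rt" using y c'_def by simp
  finally have "val (insert y \<tau>) c' = val \<tau> c" using val_abel[OF rs, of c] by simp
  then show ?thesis using lw c'_def by simp
qed

lemma extend:
  assumes "loc_const_wit E rt \<phi> \<tau>1 c1" "root_subtree E rt \<tau>2" "\<tau>1 \<subseteq> \<tau>2"
  shows "\<exists>c2. loc_const_wit E rt \<phi> \<tau>2 c2 \<and> val \<tau>2 c2 = val \<tau>1 c1"
  using assms
proof (induction "card (\<tau>2 - \<tau>1)" arbitrary: \<tau>1 c1 rule: less_induct)
  case less
  have fin2: "finite \<tau>2" and cl2: "\<And>z. z \<in> \<tau>2 \<Longrightarrow> set (geo z) \<subseteq> \<tau>2"
    using less.prems(2) unfolding root_subtree_def by auto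
  have rt1: "rt \<in> \<tau>1" using less.prems(1) unfolding loc_const_wit_def root_subtree_def by blast
  show ?case
  proof (cases "\<tau>2 - \<tau>1 = {}")
    case True
    then have "\<tau>1 = \<tau>2" using less.prems(3) by blast
    then show ?thesis using less.prems(1) by blast
  next
    case False
    then obtain y0 where "y0 \<in> \<tau>2 - \<tau>1" by blast
    then obtain y where y: "y \<in> \<tau>2 - \<tau>1" and ymin: "\<And>z. z \<in> \<tau>2 - \<tau>1 \<Longrightarrow> length (geo y) \<le> length (geo z)"
      using ex_has_least_nat[of "\<lambda>z. z \<in> \<tau>2 - \<tau>1" y0 "\<lambda>z. length (geo z)"] by blast
    have yrt: "y \<noteq> rt" using y rt1 by blast
    have "par y \<in> \<tau>2" using rs_par[OF less.prems(2)] y yrt by blast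
    moreover have "length (geo y) = Suc (length (geo (par y)))" using child_len yrt by blast
    ultimately have py: "par y \<in> \<tau>1" using ymin by fastforce
    have e1: "loc_const_wit E rt \<phi> (insert y \<tau>1) (c1(y := c1 (par y)))"
      and e2: "val (insert y \<tau>1) (c1(y := c1 (par y))) = val \<tau>1 c1"
      using extend_one[OF less.prems(1) _ yrt py] y by blast+
    have "card (\<tau>2 - insert y \<tau>1) < card (\<tau>2 - \<tau>1)"
      using y fin2 by (metis Diff_insert card_Diff1_less finite_Diff)
    from less.hyps[OF this e1 less.prems(2)] y less.prems(3)
    obtain c2 where "loc_const_wit E rt \<phi> \<tau>2 c2" "val \<tau>2 c2 = val (insert y \<tau>1) (c1(y := c1 (par y)))"
      by blast
    then show ?thesis using e2 by auto
  qed
qed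

lemma children_fin_sum: assumes "finite (children E rt x)"
  shows "(\<Sum>y\<in>children E rt x. \<nu> (bd y)) = \<nu> (bd x)"
proof -
  have "((\<lambda>y. \<nu> (bd y)) has_sum \<nu> (bd x)) (children E rt x)" using cdist unfolding is_cdist_def by blast
  moreover have "((\<lambda>y. \<nu> (bd y)) has_sum (\<Sum>y\<in>children E rt x. \<nu> (bd y))) (children E rt x)"
    using assms by (rule has_sum_finite)
  ultimately show ?thesis using has_sum_unique by blast
qed

lemma same_tau:
  assumes w1: "loc_const_wit E rt \<phi> \<tau> c1" and w2: "loc_const_wit E rt \<phi> \<tau> c2"
  shows "val \<tau> c1 = val \<tau> c2"
  unfolding val_def
proof (rule sum.cong)
  fix x assume x: "x \<in> \<tau>"
  show "c1 x * (\<nu> (bd x) - (\<Sum>y\<in>Sch \<tau> x. \<nu> (bd y))) = c2 x * (\<nu> (bd x) - (\<Sum>y\<in>Sch \<tau> x. \<nu> (bd y)))"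
  proof (cases "\<exists>\<xi>. \<xi> \<in> bd x - (\<Union>w\<in>Sch \<tau> x. bd w)")
    case True
    then obtain \<xi> where "\<xi> \<in> bd x - (\<Union>w\<in>Sch \<tau> x. bd w)" by blast
    then have "\<phi> \<xi> = c1 x" "\<phi> \<xi> = c2 x" using w1 w2 x unfolding loc_const_wit_def by blast+
    then show ?thesis by simp
  next
    case False
    have fin: "finite \<tau>" using w1 unfolding loc_const_wit_def root_subtree_def by blast
    have "children E rt x \<subseteq> Sch \<tau> x"
    proof
      fix y assume yc: "y \<in> children E rt x"
      then have yy: "y \<noteq> rt" "par y = x" by (auto simp: children_iff)
      show "y \<in> Sch \<tau> x"
      proof (rule ccontr)
        assume yn: "y \<notin> Sch \<tau> x"
        obtain \<xi> where \<xi>: "\<xi> \<in> bd y" using bdry_nonempty[OF hc] by blast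
        have "\<xi> \<in> bd x" using bdry_par[OF \<xi> yy(1)] yy by simp
        moreover have "\<xi> \<notin> bd w" if "w \<in> Sch \<tau> x" for w
        proof
          assume "\<xi> \<in> bd w"
          moreover have "length (geo y) = length (geo w)"
            using that child_len[of y x] child_len[of w x] yy unfolding Schildren_def by auto
          ultimately have "y = w" using bdry_sibling \<xi> by blast
          then show False using that yn by blast
        qed
        ultimately show False using False by blast
      qed
    qed
    moreover have "Sch \<tau> x \<subseteq> children E rt x" unfolding Schildren_def children_def by blast
    ultimately have eq: "Sch \<tau> x = children E rt x" by blast
    have "finite (children E rt x)" using eq fin unfolding Schildren_def by (metis (no_types, lifting) finite_subset mem_Collect_eq subsetI)
    then have "\<nu> (bd x) - (\<Sum>y\<in>Sch \<tau> x. \<nu> (bd y)) = 0" using eq children_fin_sum by simp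
    then show ?thesis by simp
  qed
qed simp

lemma bint_eq: assumes w: "loc_const_wit E rt \<phi> \<tau> c"
  shows "bint E rt \<phi> \<nu> = val \<tau> c"
proof -
  have uniq: "val \<tau>' c' = val \<tau> c" if w': "loc_const_wit E rt \<phi> \<tau>' c'" for \<tau>' c'
  proof -
    have rs: "root_subtree E rt \<tau>" "root_subtree E rt \<tau>'" using w w' unfolding loc_const_wit_def by auto
    have rsu: "root_subtree E rt (\<tau> \<union> \<tau>')" using rs unfolding root_subtree_def by auto
    obtain c1 where c1: "loc_const_wit E rt \<phi> (\<tau> \<union> \<tau>') c1" "val (\<tau> \<union> \<tau>') c1 = val \<tau> c"
      using extend[OF w rsu] by blast
    obtain c2 where c2: "loc_const_wit E rt \<phi> (\<tau> \<union> \<tau>') c2" "val (\<tau> \<union> \<tau>') c2 = val \<tau>' c'"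
      using extend[OF w' rsu] by blast
    show ?thesis using same_tau[OF c1(1) c2(1)] c1(2) c2(2) by simp
  qed
  have "(THE v. \<exists>\<tau> c. loc_const_wit E rt \<phi> \<tau> c \<and> v = val \<tau> c) = val \<tau> c"
    by (rule the_equality) (use w uniq in blast)+
  then show ?thesis unfolding bint_def val_def by simp
qed

end


lemma sum_set_nth: assumes "distinct xs"
  shows "(\<Sum>z\<in>set xs. f z) = (\<Sum>i<length xs. f (xs ! i))"
proof -
  have s: "set xs = (\<lambda>i. xs ! i) ` {..<length xs}" by (auto simp: in_set_conv_nth)
  have "inj_on (\<lambda>i. xs ! i) {..<length xs}" using inj_on_nth[OF assms] by simp
  then show ?thesis unfolding s by (simp add: sum.reindex)
qed

lemma abel_nat:
  fixes a b :: "nat \<Rightarrow> complex"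
  shows "(\<Sum>i<k. a i * (b i - b (Suc i))) + a k * b k = a 0 * b 0 + (\<Sum>i\<in>{1..k}. (a i - a (i - 1)) * b i)"
proof (induction k)
  case 0 then show ?case by simp
next
  case (Suc k)
  have "(\<Sum>i<Suc k. a i * (b i - b (Suc i))) + a (Suc k) * b (Suc k)
      = ((\<Sum>i<k. a i * (b i - b (Suc i))) + a k * b k) + (a (Suc k) - a k) * b (Suc k)"
    by (simp add: algebra_simps)
  also have "\<dots> = a 0 * b 0 + (\<Sum>i\<in>{1..Suc k}. (a i - a (i - 1)) * b i)"
    using Suc by simp
  finally show ?case .
qed

context dist_ctx begin

lemma Sch_path: assumes i: "i < length (geo x)"
  shows "Sch (set (geo x)) (geo x ! i) = (if Suc i < length (geo x) then {geo x ! Suc i} else {})"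
proof -
  define xs where "xs = geo x"
  have d: "distinct xs" using geo_distinct xs_def by simp
  have "w \<in> Sch (set xs) (xs ! i) \<longleftrightarrow> Suc i < length xs \<and> w = xs ! Suc i" for w
  proof
    assume "w \<in> Sch (set xs) (xs ! i)"
    then have w: "w \<in> set xs" "w \<noteq> rt" "par w = xs ! i" unfolding Schildren_def by auto
    then obtain j where j: "j < length xs" "xs ! j = w" by (metis in_set_conv_nth)
    have "j \<noteq> 0"
    proof
      assume "j = 0" then show False using j w geo_0[of x] xs_def by simp
    qed
    then have "par w = xs ! (j - 1)" using geo_nth_parent[of j x] j xs_def by simp
    then have "xs ! (j - 1) = xs ! i" using w by simp
    then have "j - 1 = i" using d j i xs_def nth_eq_iff_index_eq by (metis less_imp_diff_less)
    then show "Suc i < length xs \<and> w = xs ! Suc i" using j \<open>j \<noteq> 0\<close> by auto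
  next
    assume a: "Suc i < length xs \<and> w = xs ! Suc i"
    then show "w \<in> Sch (set xs) (xs ! i)"
      using geo_nth_parent[of "Suc i" x] xs_def unfolding Schildren_def by auto
  qed
  then show ?thesis unfolding xs_def by auto
qed

lemma path_wit:
  fixes G :: "'v \<Rightarrow> 'v \<Rightarrow> complex" and x :: 'v
  defines "\<phi> \<equiv> \<lambda>\<xi>. G x (confe E rt x \<xi>) / G rt (confe E rt x \<xi>)"
    and "c \<equiv> \<lambda>z. G x (confv E rt x z) / G rt (confv E rt x z)"
  shows "loc_const_wit E rt \<phi> (set (geo x)) c"
proof -
  define xs where "xs = geo x"
  have rs: "root_subtree E rt (set xs)"
    unfolding root_subtree_def xs_def
  proof (intro conjI ballI)
    show "rt \<in> set (geo x)" by (rule rt_in_geo)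
    fix z assume "z \<in> set (geo x)"
    then obtain j where "j < length (geo x)" "geo x ! j = z" by (metis in_set_conv_nth)
    then show "set (geo z) \<subseteq> set (geo x)" using geo_take[of j x] by (metis set_take_subset)
  qed simp
  have "\<phi> \<xi> = c z" if z: "z \<in> set xs" and \<xi>: "\<xi> \<in> bd z - (\<Union>w\<in>Sch (set xs) z. bd w)" for z \<xi>
  proof -
    obtain i where i: "i < length xs" "xs ! i = z" using z by (metis in_set_conv_nth)
    have e: "\<xi> \<in> ends E" using \<xi> bdry_ends by blast
    have "Suc i < length xs \<Longrightarrow> \<xi> \<notin> bd (xs ! Suc i)"
      using \<xi> Sch_path[of i x] i xs_def by auto
    then have "confe E rt x \<xi> = xs ! i" using confe_path[OF e, of i x] i \<xi> xs_def by auto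
    moreover have "confv E rt x z = xs ! i" using confv_path[of i x] i xs_def by simp
    ultimately show ?thesis unfolding \<phi>_def c_def by simp
  qed
  then show ?thesis unfolding loc_const_wit_def using rs xs_def by blast
qed

lemma path_val:
  fixes c :: "'v \<Rightarrow> complex"
  assumes "k = length (geo x) - 1"
  shows "val (set (geo x)) c =
    (\<Sum>i<k. c (geo x ! i) * (\<nu> (bd (geo x ! i)) - \<nu> (bd (geo x ! Suc i)))) + c x * \<nu> (bd x)"
proof -
  define xs where "xs = geo x"
  have L: "length xs = Suc k" using assms geo_len_pos xs_def by (metis Suc_diff_1)
  have "val (set xs) c = (\<Sum>i<length xs. c (xs ! i) * (\<nu> (bd (xs ! i)) - (\<Sum>y\<in>Sch (set xs) (xs ! i). \<nu> (bd y))))"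
    unfolding val_def using sum_set_nth geo_distinct xs_def by blast
  also have "\<dots> = (\<Sum>i<Suc k. c (xs ! i) * (\<nu> (bd (xs ! i)) - (if i < k then \<nu> (bd (xs ! Suc i)) else 0)))"
    unfolding L by (rule sum.cong) (use Sch_path L xs_def in auto)
  also have "\<dots> = (\<Sum>i<k. c (xs ! i) * (\<nu> (bd (xs ! i)) - \<nu> (bd (xs ! Suc i)))) + c (xs ! k) * \<nu> (bd (xs ! k))"
    by simp
  also have "xs ! k = x" using geo_lastn[of x] L xs_def by simp
  finally show ?thesis using xs_def by simp
qed

end


locale green_ctx = tree_ctx E rt for E :: "'v \<Rightarrow> 'v \<Rightarrow> bool" and rt +
  fixes p :: "'v \<Rightarrow> 'v \<Rightarrow> real" and lam :: complex
  assumes stoch: "stochastic_nn E p"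
    and res: "lam \<in> res_star E p rt"
begin

abbreviation "m x \<equiv> mweight E p rt x"
abbreviation "L2 \<equiv> l2m E p rt"
abbreviation "G x y \<equiv> green E p rt lam x y"
definition "R0 = (SOME R. is_resolvent E p rt lam R)"
definition dl :: "'v \<Rightarrow> 'v \<Rightarrow> complex" where "dl y = (\<lambda>z. if z = y then 1 else 0)"

lemma p_nonneg: "0 \<le> p x y" using stoch unfolding stochastic_nn_def by blast
lemma p_pos_iff: "0 < p x y \<longleftrightarrow> E x y" using stoch unfolding stochastic_nn_def by blast
lemma p_zero: assumes "\<not> E x y" shows "p x y = 0"
  using p_nonneg[of x y] p_pos_iff[of x y] assms by linarith
lemma p_sum: "(p x has_sum 1) UNIV" using stoch unfolding stochastic_nn_def by blast
lemma p_summable: "p x summable_on UNIV" using p_sum by (meson summable_on_def)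
lemma p_le1: "p x y \<le> 1"
proof -
  have "(p x has_sum p x y) {y}" using has_sum_finite[of "{y}" "p x"] by simp
  then show ?thesis using has_sum_mono_neutral[where f = "p x" and a = "p x y" and A = "{y}" and g = "p x" and b = 1 and B = UNIV] p_sum p_nonneg by auto
qed

lemma G_def': "G x y = R0 (dl y) x" unfolding green_def R0_def dl_def by simp

lemma res_R0: "is_resolvent E p rt lam R0"
proof -
  have "lam \<in> resolvent_set E p rt" using res unfolding res_star_def by blast
  then have "\<exists>R. is_resolvent E p rt lam R" unfolding resolvent_set_def by blast
  then show ?thesis unfolding R0_def by (rule someI_ex)
qed

lemma Gxx: "G x x \<noteq> 0" using res unfolding res_star_def by blast

lemma m_pos: "0 < m x"
proof -
  define xs where "xs = geo x"
  have "0 < p (xs ! i) (xs ! Suc i) / p (xs ! Suc i) (xs ! i)" if "i < length xs - 1" for i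
  proof -
    have "E (xs ! i) (xs ! Suc i)" using walk_nth[OF geo_walk[of x]] that xs_def by simp
    then show ?thesis using p_pos_iff sym by auto
  qed
  then show ?thesis unfolding mweight_def Let_def xs_def[symmetric] by (intro prod_pos) auto
qed

lemma m_child: assumes "y \<noteq> rt" "par y = x" shows "m y = m x * (p x y / p y x)"
proof -
  define xs where "xs = geo x"
  define n where "n = length xs"
  have n0: "0 < n" using geo_len_pos n_def xs_def by simp
  have gy: "geo y = xs @ [y]" using child_geo assms xs_def by simp
  define f where "f i = p ((xs @ [y]) ! i) ((xs @ [y]) ! Suc i) / p ((xs @ [y]) ! Suc i) ((xs @ [y]) ! i)" for i
  have "m y = (\<Prod>i<n. f i)" unfolding mweight_def Let_def gy f_def n_def by simp
  also have "\<dots> = (\<Prod>i<n - 1. f i) * f (n - 1)"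
    using n0 by (metis Suc_diff_1 prod.lessThan_Suc)
  also have "(\<Prod>i<n - 1. f i) = m x"
    unfolding mweight_def Let_def xs_def[symmetric] n_def[symmetric] f_def
    by (rule prod.cong) (auto simp: nth_append n_def)
  also have "f (n - 1) = p x y / p y x"
  proof -
    have "xs ! (n - 1) = x" using geo_lastn xs_def n_def by simp
    then show ?thesis unfolding f_def using n0 by (simp add: nth_append n_def)
  qed
  finally show ?thesis .
qed

lemma m_nb: assumes "E v w" shows "m w * p w v = m v * p v w"
  using adj_cases[OF assms]
proof
  assume "w \<noteq> rt \<and> par w = v"
  then have "m w = m v * (p v w / p w v)" using m_child by blast
  moreover have "p w v > 0" using assms sym p_pos_iff by blast
  ultimately show ?thesis by simp
next
  assume "v \<noteq> rt \<and> par v = w"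
  then have "m v = m w * (p w v / p v w)" using m_child by blast
  moreover have "p v w > 0" using assms p_pos_iff by blast
  ultimately show ?thesis by simp
qed

lemma L2_iff: "f \<in> L2 \<longleftrightarrow> (\<lambda>x. m x * (cmod (f x))^2) summable_on UNIV"
  unfolding l2m_def by simp

lemma dl_L2: "dl y \<in> L2"
proof -
  have "(\<lambda>x. m x * (cmod (dl y x))^2) summable_on {y}" by (rule summable_on_finite) simp
  then show ?thesis unfolding L2_iff
    by (subst summable_on_cong_neutral[where T = "{y}" and g = "\<lambda>x. m x * (cmod (dl y x))^2"]) (auto simp: dl_def)
qed

lemma L2_lin: assumes "f \<in> L2" "g \<in> L2" shows "(\<lambda>x. a * f x + b * g x) \<in> L2"
proof -
  have sf: "(\<lambda>x. m x * (cmod (f x))^2) summable_on UNIV" and sg: "(\<lambda>x. m x * (cmod (g x))^2) summable_on UNIV"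
    using assms L2_iff by auto
  have s: "(\<lambda>x. 2 * (cmod a)^2 * (m x * (cmod (f x))^2) + 2 * (cmod b)^2 * (m x * (cmod (g x))^2)) summable_on UNIV"
    by (intro summable_on_add summable_on_cmult_right sf sg)
  have "m x * (cmod (a * f x + b * g x))^2 \<le> 2 * (cmod a)^2 * (m x * (cmod (f x))^2) + 2 * (cmod b)^2 * (m x * (cmod (g x))^2)" for x
  proof -
    have "cmod (a * f x + b * g x) \<le> cmod a * cmod (f x) + cmod b * cmod (g x)"
      by (metis norm_mult norm_triangle_ineq)
    then have "(cmod (a * f x + b * g x))^2 \<le> (cmod a * cmod (f x) + cmod b * cmod (g x))^2"
      by (simp add: power_mono)
    also have "\<dots> \<le> 2 * (cmod a * cmod (f x))^2 + 2 * (cmod b * cmod (g x))^2"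
    proof -
      fix A B :: real
      have "0 \<le> (cmod a * cmod (f x) - cmod b * cmod (g x))^2" by simp
      then show ?thesis unfolding power2_diff power2_sum by linarith
    qed
    also have "\<dots> = 2 * (cmod a)^2 * (cmod (f x))^2 + 2 * (cmod b)^2 * (cmod (g x))^2"
      by (simp add: power_mult_distrib)
    finally have X: "(cmod (a * f x + b * g x))^2 \<le> 2 * (cmod a)^2 * (cmod (f x))^2 + 2 * (cmod b)^2 * (cmod (g x))^2" .
    have "m x * (cmod (a * f x + b * g x))^2 \<le> m x * (2 * (cmod a)^2 * (cmod (f x))^2 + 2 * (cmod b)^2 * (cmod (g x))^2)"
      using X m_pos[of x] by (intro mult_left_mono) auto
    then show ?thesis by (simp add: algebra_simps)
  qed
  then show ?thesis unfolding L2_iff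
    by (rule summable_on_comparison_test[OF s]) (simp add: m_pos less_imp_le)
qed

lemma L2_restrict: assumes "f \<in> L2" shows "(\<lambda>x. if x \<in> B then f x else 0) \<in> L2"
proof -
  have sf: "(\<lambda>x. m x * (cmod (f x))^2) summable_on UNIV" using assms L2_iff by auto
  show ?thesis unfolding L2_iff
    by (rule summable_on_comparison_test[OF sf]) (auto simp: m_pos less_imp_le)
qed

lemma L2_pop_abs: assumes "g \<in> L2"
  shows "(\<lambda>z. norm (complex_of_real (p v z) * g z)) summable_on UNIV"
proof -
  have sg: "(\<lambda>z. m z * (cmod (g z))^2) summable_on UNIV" using assms L2_iff by auto
  define bnd where "bnd z = (1 / (2 * m v)) * p v z + (1/2) * (m z * (cmod (g z))^2)" for z
  have sb: "bnd summable_on UNIV" unfolding bnd_def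
    by (intro summable_on_add summable_on_cmult_right p_summable sg)
  have "norm (complex_of_real (p v z) * g z) \<le> bnd z" for z
  proof (cases "E v z")
    case False
    then show ?thesis using p_zero[OF False] m_pos[of v] m_pos[of z] unfolding bnd_def
      by (simp add: p_nonneg)
  next
    case True
    have mz: "0 < m z" "0 < m v" using m_pos by auto
    have eq: "p v z / m z = p z v / m v" using m_nb[OF True] mz
      by (simp add: field_simps)
    have a: "p v z * cmod (g z) \<le> ((p v z)^2 / m z + m z * (cmod (g z))^2) / 2"
    proof -
      have "0 \<le> (p v z - m z * cmod (g z))^2" by simp
      then have "2 * (p v z * (m z * cmod (g z))) \<le> (p v z)^2 + (m z * cmod (g z))^2"
        by (simp add: power2_diff)
      then show ?thesis using mz by (simp add: field_simps power2_eq_square)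
    qed
    have "(p v z)^2 / m z = p v z * (p v z / m z)" by (simp add: power2_eq_square)
    also have "\<dots> = p v z * (p z v / m v)" using eq by simp
    also have "\<dots> \<le> p v z * (1 / m v)" using p_le1[of z v] mz p_nonneg
      by (intro mult_left_mono divide_right_mono) auto
    finally have "(p v z)^2 / m z \<le> p v z / m v" by simp
    then have "p v z * cmod (g z) \<le> bnd z" using a unfolding bnd_def by (simp add: field_simps)
    then show ?thesis by (simp add: norm_mult p_nonneg)
  qed
  then show ?thesis by (intro Infinite_Sum.abs_summable_on_comparison_test'[OF sb]) auto
qed

lemma L2_pop_summable: assumes "g \<in> L2" shows "(\<lambda>z. complex_of_real (p v z) * g z) summable_on UNIV"
  using L2_pop_abs[OF assms] by (rule Infinite_Sum.abs_summable_summable)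

lemma L2_pop_has_sum: "g \<in> L2 \<Longrightarrow> ((\<lambda>z. complex_of_real (p v z) * g z) has_sum Pop p g v) UNIV"
  unfolding Pop_def using L2_pop_summable has_sum_infsum by blast

lemma Pop_lin: assumes "f \<in> L2" "g \<in> L2"
  shows "Pop p (\<lambda>z. a * f z + b * g z) v = a * Pop p f v + b * Pop p g v"
proof -
  have "((\<lambda>z. complex_of_real (p v z) * (a * f z + b * g z)) has_sum (a * Pop p f v + b * Pop p g v)) UNIV"
  proof -
    have "((\<lambda>z. a * (complex_of_real (p v z) * f z) + b * (complex_of_real (p v z) * g z)) has_sum (a * Pop p f v + b * Pop p g v)) UNIV"
      by (intro has_sum_add has_sum_cmult_right L2_pop_has_sum assms)
    then show ?thesis by (simp add: algebra_simps)
  qed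
  then show ?thesis unfolding Pop_def by (rule infsumI)
qed

lemma G_L2: "(\<lambda>x. G x y) \<in> L2"
  using res_R0 dl_L2 unfolding is_resolvent_def G_def' by blast

lemma G_eq: "lam * G v y - Pop p (\<lambda>x. G x y) v = dl y v"
proof -
  have "(\<lambda>x. lam * R0 (dl y) x - Pop p (R0 (dl y)) x) = dl y"
    using res_R0 dl_L2 unfolding is_resolvent_def by blast
  then show ?thesis unfolding G_def' by (metis (no_types, lifting))
qed

lemma G_has_sum: "((\<lambda>z. complex_of_real (p v z) * G z y) has_sum (lam * G v y - dl y v)) UNIV"
proof -
  have "Pop p (\<lambda>x. G x y) v = lam * G v y - dl y v" using G_eq[of v y] by (simp add: algebra_simps)
  then show ?thesis using L2_pop_has_sum[OF G_L2, of v y] by simp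
qed

lemma uniq: assumes f: "f \<in> L2" and h: "\<And>v. v \<noteq> x \<Longrightarrow> lam * f v = Pop p f v"
  shows "f v = (lam * f x - Pop p f x) * G v x"
proof -
  define c where "c = lam * f x - Pop p f x"
  define g where "g v = c * G v x" for v
  have gL: "g \<in> L2" using L2_lin[OF G_L2 G_L2, of c x 0 x] unfolding g_def by simp
  have "Pop p g v = c * Pop p (\<lambda>z. G z x) v" for v
    using Pop_lin[OF G_L2 G_L2, of c x 0 x v] unfolding g_def by simp
  then have eg: "(\<lambda>v. lam * g v - Pop p g v) = (\<lambda>v. c * dl x v)"
    using G_eq[of _ x] unfolding g_def by (auto simp: algebra_simps)
  have ef: "(\<lambda>v. lam * f v - Pop p f v) = (\<lambda>v. c * dl x v)"
  proof
    fix v show "lam * f v - Pop p f v = c * dl x v"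
      by (cases "v = x") (auto simp: dl_def c_def h)
  qed
  have "R0 (\<lambda>v. lam * f v - Pop p f v) = f" using res_R0 f unfolding is_resolvent_def by blast
  moreover have "R0 (\<lambda>v. lam * g v - Pop p g v) = g" using res_R0 gL unfolding is_resolvent_def by blast
  ultimately have "f = g" using eg ef by simp
  then have "f v = g v" by simp
  then show ?thesis unfolding g_def c_def .
qed

end


context green_ctx begin

lemma branch:
  assumes xB: "x \<notin> B" and cl: "\<And>v w. v \<in> B \<Longrightarrow> E v w \<Longrightarrow> w \<in> B \<or> w = x"
    and yB: "y \<notin> B" and vB: "v \<in> B"
  shows "G v y * G x x = G v x * G x y"
proof -
  define F where "F z = G x x * G z y + (- G x y) * G z x" for z
  define f where "f z = (if z \<in> B then F z else 0)" for z
  have FL: "F \<in> L2" unfolding F_def by (rule L2_lin[OF G_L2 G_L2])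
  have fL: "f \<in> L2" unfolding f_def using L2_restrict[OF FL] by simp
  have Fx: "F x = 0" unfolding F_def by simp
  have harm: "lam * f v = Pop p f v" if "v \<noteq> x" for v
  proof (cases "v \<in> B")
    case True
    have pe: "complex_of_real (p v z) * f z = complex_of_real (p v z) * F z" for z
    proof (cases "p v z = 0")
      case False
      then have "E v z" using p_pos_iff p_nonneg by (metis less_eq_real_def)
      then have "z \<in> B \<or> z = x" using cl True by blast
      then show ?thesis unfolding f_def using Fx xB by auto
    qed simp
    have "Pop p f v = Pop p F v" by (simp only: Pop_def pe)
    also have "\<dots> = G x x * Pop p (\<lambda>z. G z y) v + (- G x y) * Pop p (\<lambda>z. G z x) v"
      unfolding F_def by (rule Pop_lin[OF G_L2 G_L2])
    also have "\<dots> = G x x * (lam * G v y - dl y v) + (- G x y) * (lam * G v x - dl x v)"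
      using G_eq[of v y] G_eq[of v x] by (simp add: algebra_simps)
    finally have "Pop p f v = G x x * (lam * G v y - dl y v) + (- G x y) * (lam * G v x - dl x v)" .
    moreover have "dl y v = 0" "dl x v = 0" using True yB xB unfolding dl_def by auto
    ultimately show ?thesis unfolding f_def F_def using True by (simp add: algebra_simps)
  next
    case False
    have pe0: "complex_of_real (p v z) * f z = 0" for z
    proof (cases "p v z = 0")
      case pz: False
      then have "E v z" using p_pos_iff p_nonneg by (metis less_eq_real_def)
      then have "E z v" using sym by blast
      then have "z \<notin> B" using cl False that by blast
      then show ?thesis unfolding f_def by simp
    qed simp
    have "Pop p f v = 0" by (simp only: Pop_def pe0 infsum_0)
    then show ?thesis unfolding f_def using False by simp
  qed
  have u: "f z = (lam * f x - Pop p f x) * G z x" for z by (rule uniq[OF fL harm])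
  have "f x = 0" unfolding f_def using xB by simp
  then have "(lam * f x - Pop p f x) * G x x = 0" using u[of x] by simp
  then have "lam * f x - Pop p f x = 0" using Gxx by simp
  then have "f v = 0" using u[of v] by simp
  then have "F v = 0" unfolding f_def using vB by simp
  then show ?thesis unfolding F_def by (simp add: algebra_simps)
qed

lemma branch_child: assumes "u \<noteq> rt" "par u = x" "y \<notin> subtree_at E rt u"
  shows "G u y * G x x = G u x * G x y"
proof (rule branch[where B = "subtree_at E rt u"])
  show "x \<notin> subtree_at E rt u" using par_nsub assms by blast
  show "\<And>v w. v \<in> subtree_at E rt u \<Longrightarrow> E v w \<Longrightarrow> w \<in> subtree_at E rt u \<or> w = x"
    using nb_sub assms by blast
qed (use assms self_sub in auto)

lemma branch_up: assumes "x \<noteq> rt" "v \<notin> subtree_at E rt x" "y \<in> subtree_at E rt x"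
  shows "G v y * G x x = G v x * G x y"
proof (rule branch[where B = "- subtree_at E rt x"])
  show "x \<notin> - subtree_at E rt x" using self_sub by blast
  show "\<And>v w. v \<in> - subtree_at E rt x \<Longrightarrow> E v w \<Longrightarrow> w \<in> - subtree_at E rt x \<or> w = x"
    using nb_nsub by blast
qed (use assms in auto)

lemma child_ne: assumes "y \<noteq> rt" "par y = x" shows "y \<noteq> x"
proof
  assume "y = x"
  then have "par y = y" using assms by simp
  then show False using par_nsub[of y] self_sub[of y] assms by simp
qed

lemma key_star: assumes y: "y \<noteq> rt" "par y = x"
  shows "complex_of_real (p x y) * (G x x * G y y - G x y * G y x) = G x y"
proof -
  have yx: "y \<noteq> x" using child_ne y by blast
  have h1: "((\<lambda>u. complex_of_real (p x u) * G u y) has_sum (lam * G x y)) UNIV"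
    using G_has_sum[of x y] yx unfolding dl_def by simp
  have h2: "((\<lambda>u. complex_of_real (p x u) * G u x) has_sum (lam * G x x - 1)) UNIV"
    using G_has_sum[of x x] unfolding dl_def by simp
  have h3: "((\<lambda>u. G x x * (complex_of_real (p x u) * G u y) + (- G x y) * (complex_of_real (p x u) * G u x))
      has_sum (G x x * (lam * G x y) + (- G x y) * (lam * G x x - 1))) UNIV"
    by (intro has_sum_add has_sum_cmult_right h1 h2)
  define F where "F u = G x x * (complex_of_real (p x u) * G u y) + (- G x y) * (complex_of_real (p x u) * G u x)" for u
  have Fz: "F u = 0" if "u \<noteq> y" for u
  proof (cases "E x u")
    case False then show ?thesis unfolding F_def using p_zero by simp
  next
    case True
    from adj_cases[OF True] have "G u y * G x x = G u x * G x y"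
    proof
      assume "u \<noteq> rt \<and> par u = x"
      then show ?thesis using branch_child sibling_nsub y that by metis
    next
      assume "x \<noteq> rt \<and> par x = u"
      then show ?thesis using branch_up[of x u y] par_nsub child_sub y by blast
    qed
    then show ?thesis unfolding F_def by (simp add: algebra_simps)
  qed
  have "(F has_sum F y) {y}" using has_sum_finite[of "{y}" F] by simp
  then have "(F has_sum F y) UNIV" by (rule has_sum_cong_neutral[THEN iffD1, rotated -1]) (use Fz in auto)
  moreover have "(F has_sum G x y) UNIV" using h3 unfolding F_def by (simp add: algebra_simps)
  ultimately have "F y = G x y" using has_sum_unique by blast
  then show ?thesis unfolding F_def by (simp add: algebra_simps)
qed

lemma Gxy_nz: assumes "y \<noteq> rt" "par y = x" shows "G x y \<noteq> 0"
proof
  assume "G x y = 0"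
  then have "complex_of_real (p x y) * (G x x * G y y) = 0" using key_star[OF assms] by simp
  moreover have "0 < p x y" using child_E[OF assms] p_pos_iff by blast
  then have "p x y \<noteq> 0" by simp
  ultimately show False using Gxx[of x] Gxx[of y] by simp
qed

lemma Gor_child: assumes "y \<noteq> rt" "par y = x" shows "G rt y * G x x = G rt x * G x y"
proof (cases "x = rt")
  case True then show ?thesis by (simp add: mult.commute)
next
  case False
  then show ?thesis using branch_up[of x rt y] rt_nsub child_sub assms by blast
qed

lemma Gor_nz: "G rt x \<noteq> 0"
proof -
  have "\<forall>x. length (geo x) = Suc n \<longrightarrow> G rt x \<noteq> 0" for n
  proof (induction n)
    case 0 then show ?case using geo_len1 Gxx by auto
  next
    case (Suc n)
    show ?case
    proof (intro allI impI)
      fix x assume l: "length (geo x) = Suc (Suc n)"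
      then have xr: "x \<noteq> rt" using geo_rt by auto
      have "length (geo (par x)) = Suc n" using child_len[OF xr refl] l by simp
      then have "G rt (par x) \<noteq> 0" using Suc by blast
      then have "G rt x * G (par x) (par x) \<noteq> 0"
        using Gor_child[OF xr refl] Gxy_nz[OF xr refl] by simp
      then show "G rt x \<noteq> 0" by simp
    qed
  qed
  then show ?thesis using geo_len_pos by (metis Suc_pred')
qed

lemma I1: assumes "y \<noteq> rt" "par y = x"
  shows "complex_of_real (p x y) * (G y y / G rt y - G y x / G rt x) = 1 / G rt x"
proof -
  have nz: "G rt x \<noteq> 0" "G rt y \<noteq> 0" "G x y \<noteq> 0" "G x x \<noteq> 0"
    using Gor_nz Gxy_nz[OF assms] Gxx by auto
  have a: "G rt y = G rt x * G x y / G x x" using Gor_child[OF assms] nz by (simp add: field_simps)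
  have k: "complex_of_real (p x y) * (G x x * G y y) = G x y + complex_of_real (p x y) * G x y * G y x"
    using key_star[OF assms] by (simp add: algebra_simps)
  have "complex_of_real (p x y) * (G y y / G rt y) = complex_of_real (p x y) * (G x x * G y y) / (G rt x * G x y)"
    unfolding a using nz by (simp add: field_simps)
  also have "\<dots> = 1 / G rt x + complex_of_real (p x y) * G y x / G rt x"
    unfolding k using nz by (simp add: field_simps)
  finally show ?thesis by (simp add: algebra_simps diff_divide_distrib)
qed

lemma I2: assumes "x \<noteq> rt"
  shows "G (par x) x / G rt x = G (par x) (par x) / G rt (par x)"
proof -
  have "G rt x * G (par x) (par x) = G rt (par x) * G (par x) x" using Gor_child[OF assms refl] .
  then show ?thesis using Gor_nz[of x] Gor_nz[of "par x"] by (simp add: field_simps)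
qed

end


lemma has_sum_finsum:
  fixes f :: "'i \<Rightarrow> 'a \<Rightarrow> complex"
  assumes "finite I" "\<And>i. i \<in> I \<Longrightarrow> (f i has_sum s i) A"
  shows "((\<lambda>x. \<Sum>i\<in>I. f i x) has_sum (\<Sum>i\<in>I. s i)) A"
  using assms
proof (induction I rule: finite_induct)
  case empty then show ?case by (simp add: has_sum_0)
next
  case (insert j I)
  have "((\<lambda>x. f j x + (\<Sum>i\<in>I. f i x)) has_sum (s j + (\<Sum>i\<in>I. s i))) A"
    using insert by (intro has_sum_add) auto
  then show ?case using insert by simp
qed

context green_ctx begin

definition K2 :: "'v \<Rightarrow> 'v \<Rightarrow> complex" where "K2 w v = G v w / G rt w"

lemma nb_exists: "\<exists>y. E x y"
proof (rule ccontr)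
  assume "\<not> (\<exists>y. E x y)"
  then have "p x = (\<lambda>_. 0)" using p_zero by auto
  then have "(p x has_sum 0) UNIV" by (simp add: has_sum_0)
  then show False using has_sum_unique p_sum[of x] by fastforce
qed

lemma K2_has_sum:
  "((\<lambda>v. complex_of_real (p x v) * K2 w v) has_sum ((lam * G x w - dl w x) / G rt w)) UNIV"
proof -
  have "((\<lambda>v. (1 / G rt w) * (complex_of_real (p x v) * G v w)) has_sum ((1 / G rt w) * (lam * G x w - dl w x))) UNIV"
    by (intro has_sum_cmult_right G_has_sum)
  then show ?thesis unfolding K2_def by (simp add: field_simps)
qed

end

locale full_ctx = green_ctx E rt p lam + dist_ctx E rt \<nu>
  for E :: "'v \<Rightarrow> 'v \<Rightarrow> bool" and rt p lam \<nu>
begin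

definition nb :: "'v \<Rightarrow> complex" where "nb z = \<nu> (bd z)"

definition H :: "'v \<Rightarrow> complex" where
  "H z = (\<Sum>i<length (geo z) - 1. K2 (geo z ! i) z * (nb (geo z ! i) - nb (geo z ! Suc i))) + K2 z z * nb z"

lemma Kv_path: assumes "i < length (geo z)" shows "Kv E p rt lam z (geo z ! i) = K2 (geo z ! i) z"
  unfolding Kv_def K2_def using confv_path[OF assms] by simp

lemma Kv_self: "Kv E p rt lam z z = K2 z z"
  using Kv_path[of "length (geo z) - 1" z] geo_lastn[of z] geo_len_pos[of z] by simp

lemma bint_formula:
  "bint E rt (\<lambda>\<xi>. Ke E p rt lam z \<xi>) \<nu> =
    (\<Sum>i<length (geo z) - 1. Kv E p rt lam z (geo z ! i) * (\<nu> (bd (geo z ! i)) - \<nu> (bd (geo z ! Suc i))))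
     + Kv E p rt lam z z * \<nu> (bd z)"
proof -
  have w: "loc_const_wit E rt (\<lambda>\<xi>. Ke E p rt lam z \<xi>) (set (geo z)) (\<lambda>w. Kv E p rt lam z w)"
    using path_wit[of "green E p rt lam" z] unfolding Ke_def Kv_def by simp
  show ?thesis using bint_eq[OF w] path_val[of _ z] by simp
qed

lemma bint_H: "bint E rt (\<lambda>\<xi>. Ke E p rt lam z \<xi>) \<nu> = H z"
  unfolding bint_formula H_def nb_def Kv_self
  by (intro arg_cong2[where f = "(+)"] sum.cong refl) (simp add: Kv_path)

lemma harm: "((\<lambda>v. complex_of_real (p x v) * H v) has_sum (lam * H x)) UNIV"
proof -
  define xs where "xs = geo x"
  define k where "k = length xs - 1"
  have lx: "length xs = Suc k" using geo_len_pos[of x] unfolding k_def xs_def by simp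
  have xk: "xs ! k = x" using geo_lastn[of x] unfolding k_def xs_def by simp
  define d where "d i = nb (xs ! i) - nb (xs ! Suc i)" for i
  have Hx: "H x = (\<Sum>i<k. K2 (xs ! i) x * d i) + K2 x x * nb x"
    unfolding H_def d_def xs_def k_def by simp
  define Q where "Q v = (\<Sum>i<k. d i * (complex_of_real (p x v) * K2 (xs ! i) v))
      + nb x * (complex_of_real (p x v) * K2 x v)
      + (if v \<noteq> rt \<and> par v = x then nb v / G rt x else 0)" for v
  have step1: "complex_of_real (p x v) * H v = Q v" for v
  proof (cases "E x v")
    case False
    then have "p x v = 0" by (rule p_zero)
    moreover have "\<not> (v \<noteq> rt \<and> par v = x)" using False child_E by blast
    ultimately show ?thesis unfolding Q_def by auto
  next
    case True
    from adj_cases[OF True] show ?thesis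
    proof
      assume vc: "v \<noteq> rt \<and> par v = x"
      have gv: "geo v = xs @ [v]" using child_geo vc xs_def by blast
      have lv: "length (geo v) - 1 = Suc k" using gv lx by simp
      have "(\<Sum>i<Suc k. K2 (geo v ! i) v * (nb (geo v ! i) - nb (geo v ! Suc i)))
          = (\<Sum>i<k. K2 (xs ! i) v * d i) + K2 x v * (nb x - nb v)"
      proof -
        have "(\<Sum>i<k. K2 (geo v ! i) v * (nb (geo v ! i) - nb (geo v ! Suc i))) = (\<Sum>i<k. K2 (xs ! i) v * d i)"
          by (rule sum.cong) (auto simp: gv nth_append lx d_def)
        moreover have "geo v ! k = x" "geo v ! Suc k = v" using gv lx xk by (auto simp: nth_append)
        ultimately show ?thesis by simp
      qed
      then have Hv: "H v = (\<Sum>i<k. K2 (xs ! i) v * d i) + K2 x v * (nb x - nb v) + K2 v v * nb v"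
        unfolding H_def lv by simp
      have i1: "complex_of_real (p x v) * (K2 v v - K2 x v) = 1 / G rt x"
        using I1[of v x] vc unfolding K2_def by simp
      have "complex_of_real (p x v) * H v = (\<Sum>i<k. d i * (complex_of_real (p x v) * K2 (xs ! i) v))
          + nb x * (complex_of_real (p x v) * K2 x v) + nb v * (complex_of_real (p x v) * (K2 v v - K2 x v))"
        unfolding Hv by (simp add: algebra_simps sum_distrib_left)
      then show ?thesis unfolding Q_def i1 using vc by simp
    next
      assume xp: "x \<noteq> rt \<and> par x = v"
      have gx: "xs = geo v @ [x]" using child_geo xp xs_def by blast
      have "length (geo v) = k" using gx lx by simp
      moreover have "k \<noteq> 0" using xp geo_len1[of x] lx xs_def by auto
      ultimately obtain j where kj: "k = Suc j" and lv: "length (geo v) = Suc j" by (metis not0_implies_Suc)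
      have vj: "xs ! j = v" using gx lv geo_lastn[of v] by (simp add: nth_append)
      have Hv: "H v = (\<Sum>i<j. K2 (xs ! i) v * d i) + K2 v v * nb v"
        unfolding H_def lv d_def by (simp add: gx nth_append lv)
      have i2: "K2 x v = K2 v v" using I2[of x] xp unfolding K2_def by simp
      have nc: "\<not> (v \<noteq> rt \<and> par v = x)"
      proof
        assume "v \<noteq> rt \<and> par v = x"
        then have "length (geo v) = Suc (length (geo x))" using child_len by blast
        then show False using xp child_len[of x v] by simp
      qed
      have "Q v = complex_of_real (p x v) * ((\<Sum>i<j. K2 (xs ! i) v * d i) + (K2 v v * d j + K2 x v * nb x))"
        unfolding Q_def kj if_not_P[OF nc] by (simp add: algebra_simps sum_distrib_left vj)
      also have "K2 v v * d j + K2 x v * nb x = K2 v v * nb v"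
        unfolding d_def i2 vj using xk kj by (simp add: algebra_simps)
      finally show ?thesis unfolding Hv by (simp add: algebra_simps)
    qed
  qed
  have s1: "((\<lambda>v. \<Sum>i<k. d i * (complex_of_real (p x v) * K2 (xs ! i) v)) has_sum (\<Sum>i<k. d i * (lam * K2 (xs ! i) x))) UNIV"
  proof (rule has_sum_finsum)
    fix i assume "i \<in> {..<k}"
    then have ik: "i < k" by simp
    have "xs ! i \<noteq> x"
    proof
      assume "xs ! i = x"
      then have "xs ! i = xs ! k" using xk by simp
      then show False using geo_distinct[of x] ik lx xs_def nth_eq_iff_index_eq by (metis less_Suc_eq less_irrefl)
    qed
    then have "dl (xs ! i) x = 0" unfolding dl_def by simp
    then have "((\<lambda>v. complex_of_real (p x v) * K2 (xs ! i) v) has_sum (lam * K2 (xs ! i) x)) UNIV"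
      using K2_has_sum[of x "xs ! i"] unfolding K2_def by simp
    then show "((\<lambda>v. d i * (complex_of_real (p x v) * K2 (xs ! i) v)) has_sum (d i * (lam * K2 (xs ! i) x))) UNIV"
      by (rule has_sum_cmult_right)
  qed simp
  have s2: "((\<lambda>v. nb x * (complex_of_real (p x v) * K2 x v)) has_sum (nb x * ((lam * G x x - 1) / G rt x))) UNIV"
    using K2_has_sum[of x x] unfolding dl_def by (intro has_sum_cmult_right) simp
  have s3: "((\<lambda>v. if v \<noteq> rt \<and> par v = x then nb v / G rt x else 0) has_sum (nb x / G rt x)) UNIV"
  proof -
    have "((\<lambda>y. \<nu> (bd y)) has_sum \<nu> (bd x)) (children E rt x)" using cdist unfolding is_cdist_def by blast
    then have "((\<lambda>y. (1 / G rt x) * \<nu> (bd y)) has_sum ((1 / G rt x) * \<nu> (bd x))) (children E rt x)"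
      by (rule has_sum_cmult_right)
    then have "((\<lambda>y. nb y / G rt x) has_sum (nb x / G rt x)) (children E rt x)"
      unfolding nb_def by simp
    then show ?thesis
      by (rule has_sum_cong_neutral[THEN iffD1, rotated -1]) (auto simp: children_iff)
  qed
  have "(Q has_sum ((\<Sum>i<k. d i * (lam * K2 (xs ! i) x)) + nb x * ((lam * G x x - 1) / G rt x) + nb x / G rt x)) UNIV"
    unfolding Q_def by (intro has_sum_add s1 s2 s3)
  moreover have "(\<Sum>i<k. d i * (lam * K2 (xs ! i) x)) + nb x * ((lam * G x x - 1) / G rt x) + nb x / G rt x = lam * H x"
    unfolding Hx K2_def using Gor_nz[of x]
    by (simp add: algebra_simps sum_distrib_left diff_divide_distrib)
  ultimately show ?thesis using step1 by simp
qed

end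

theorem proposition3p1:
  fixes E :: "'v::countable \<Rightarrow> 'v \<Rightarrow> bool" and p :: "'v \<Rightarrow> 'v \<Rightarrow> real" and rt :: 'v
    and lam :: complex and \<nu> :: "(nat \<Rightarrow> 'v) set set \<Rightarrow> complex" and h :: "'v \<Rightarrow> complex"
  assumes "is_tree E" and "no_leaves E" and "stochastic_nn E p"
    and "lam \<in> res_star E p rt" and "is_cdist E rt \<nu>"
    and "\<And>x. h x = bint E rt (\<lambda>\<xi>. Ke E p rt lam x \<xi>) \<nu>"
  shows "(\<forall>x. ((\<lambda>y. norm (complex_of_real (p x y) * h y)) summable_on UNIV) \<and>
             HAS_SUM (\<lambda>y. complex_of_real (p x y) * h y) UNIV (lam * h x)) \<and>
         (\<forall>x. let xs = geod E rt x; k = length xs - 1 in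
           h x = (\<Sum>i<k. Kv E p rt lam x (xs!i) *
                     (\<nu> (bdry_at E rt (xs!i)) - \<nu> (bdry_at E rt (xs!Suc i))))
                 + Kv E p rt lam x x * \<nu> (bdry_at E rt x)
         \<and> h x = Kv E p rt lam x rt * \<nu> (bdry_at E rt rt)
                 + (\<Sum>i\<in>{1..k}. (Kv E p rt lam x (xs!i) - Kv E p rt lam x (xs!(i-1))) *
                     \<nu> (bdry_at E rt (xs!i))))"
proof -
  interpret T: tree_ctx E rt using assms(1) by unfold_locales
  interpret GC: green_ctx E rt p lam using assms(1,3,4) by unfold_locales
  have hc: "\<And>x. \<exists>y. y \<noteq> rt \<and> parent E rt y = x"
    using T.has_child[OF GC.nb_exists assms(2)] by blast
  interpret F: full_ctx E rt p lam \<nu> using assms(1,3,4,5) hc by unfold_locales auto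
  have hH: "h z = F.H z" for z using assms(6) F.bint_H by simp
  show ?thesis
  proof (intro conjI allI)
    fix x
    have hs: "((\<lambda>y. complex_of_real (p x y) * h y) has_sum (lam * h x)) UNIV"
      using F.harm[of x] hH by simp
    then show "((\<lambda>y. complex_of_real (p x y) * h y) has_sum (lam * h x)) UNIV" .
    have "(\<lambda>y. complex_of_real (p x y) * h y) summable_on UNIV" using hs by (meson summable_on_def)
    then show "(\<lambda>y. norm (complex_of_real (p x y) * h y)) summable_on UNIV"
      by (simp add: Infinite_Sum.summable_on_iff_abs_summable_on_complex)
  next
    fix x
    define xs where "xs = geod E rt x"
    define k where "k = length xs - 1"
    have f1: "h x = (\<Sum>i<k. Kv E p rt lam x (xs!i) * (\<nu> (bdry_at E rt (xs!i)) - \<nu> (bdry_at E rt (xs!Suc i))))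
                 + Kv E p rt lam x x * \<nu> (bdry_at E rt x)"
      using assms(6)[of x] F.bint_formula[of x] unfolding xs_def k_def by simp
    have x0: "xs ! 0 = rt" using T.geo_0 xs_def by simp
    have xk: "xs ! k = x" using T.geo_lastn xs_def k_def by simp
    have f2: "h x = Kv E p rt lam x rt * \<nu> (bdry_at E rt rt)
                 + (\<Sum>i\<in>{1..k}. (Kv E p rt lam x (xs!i) - Kv E p rt lam x (xs!(i-1))) * \<nu> (bdry_at E rt (xs!i)))"
      using f1 abel_nat[of "\<lambda>i. Kv E p rt lam x (xs!i)" "\<lambda>i. \<nu> (bdry_at E rt (xs!i))" k] x0 xk by simp
    show "let xs = geod E rt x; k = length xs - 1 in
           h x = (\<Sum>i<k. Kv E p rt lam x (xs!i) *
                     (\<nu> (bdry_at E rt (xs!i)) - \<nu> (bdry_at E rt (xs!Suc i))))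
                 + Kv E p rt lam x x * \<nu> (bdry_at E rt x)
         \<and> h x = Kv E p rt lam x rt * \<nu> (bdry_at E rt rt)
                 + (\<Sum>i\<in>{1..k}. (Kv E p rt lam x (xs!i) - Kv E p rt lam x (xs!(i-1))) *
                     \<nu> (bdry_at E rt (xs!i)))"
      unfolding Let_def xs_def[symmetric] k_def[symmetric] using f1 f2 by blast
  qed
qed

end
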